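(* In the setting of the context, suppose $\mathbf H$ admits dual Specht modules $\{S_\lambda\}_{\lambda\in\Lambda}$ and that $\mathcal R^1\mathcal G(S_\lambda)=0$ for all $\lambda\in\Lambda$. Then: (a) an $\mathbf H$-module $N$ has a dual Specht filtration if and only if $\mathcal G(N)\in\mathbf S\text{-mod}$ has a $\Delta$-filtration; (b) $\mathcal G\circ\mathcal F(M)\cong M$ for every $\mathbf S$-module $M$ with a $\Delta$-filtration.
   Context: Let $K$ be a field, $\mathbf S,\mathbf H$ finite-dimensional $K$-algebras, $e=e^2\in\mathbf S$ with $e\mathbf Se\cong\mathbf H$; modules are finite-dimensional left modules. Schur functor $\mathcal F:\mathbf S\text{-mod}\to\mathbf H\text{-mod}$, $M\mapsto eM$; inverse Schur functor $\mathcal G:\mathbf H\text{-mod}\to\mathbf S\text{-mod}$, $N\mapsto\mathrm{Hom}_{\mathbf H}(e\mathbf S,N)$ (left exact, $\mathcal F\circ\mathcal G\cong\mathrm{id}$); $\mathcal R^1\mathcal G$ is its first right derived functor. $\mathbf H$ admits dual Specht modules if: (i) there is a family of pairwise non-isomorphic $\mathbf H$-modules $\{S^\lambda\}_{\lambda\in\Lambda}$ (Specht modules) indexed by a finite poset $(\Lambda,\le)$ such that $\mathrm{Ext}^1_{\mathbf H}(S^\lambda,S^\mu)\ne0$ implies $\lambda>\mu$; (ii) there are an algebra automorphism $\#$ and an algebra anti-automorphism $*$ of $\mathbf H$ and an order-reversing involution $\lambda\mapsto\lambda^t$ of $\Lambda$ with $S_{\lambda^t}\cong(S^\lambda)^\#$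 for all $\lambda$, where $V^\#$ is $V$ with $h$ acting by $h^\#$, $V^*=\mathrm{Hom}_K(V,K)$ with $(h\cdot f)(v)=f(h^*v)$, and $S_\lambda:=(S^\lambda)^*$ is the dual Specht module. Put $\Delta(\lambda):=\mathcal G(S_\lambda)$. A dual Specht filtration of $N$ is a chain $0=N_0\subset\cdots\subset N_t=N$ with each $N_i/N_{i-1}\cong S_{\mu_i}$ for some $\mu_i\in\Lambda$; a $\Delta$-filtration is defined likewise with subquotients of the form $\Delta(\mu)$. *)

theory Defs
  imports Main "HOL-Library.Function_Algebras" "HOL-Library.Product_Plus"
begin

text \<open>A module over a K-algebra A (elements of type 'a, K-scaling sa), living in an
  ambient abelian group type 'm: carrier, K-scalar multiplication, A-action.\<close>

record ('k, 'a, 'm) modl =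
  carr :: "'m set"
  smul :: "'k \<Rightarrow> 'm \<Rightarrow> 'm"
  act  :: "'a \<Rightarrow> 'm \<Rightarrow> 'm"

definition fin_dim_on :: "('k::field \<Rightarrow> 'm::ab_group_add \<Rightarrow> 'm) \<Rightarrow> 'm set \<Rightarrow> bool" where
  "fin_dim_on sm V \<longleftrightarrow>
     (\<exists>B. finite B \<and> B \<subseteq> V \<and> (\<forall>v\<in>V. \<exists>c. v = (\<Sum>b\<in>B. sm (c b) b)))"

definition kalg :: "('k::field \<Rightarrow> 'a::ring_1 \<Rightarrow> 'a) \<Rightarrow> bool" where
  "kalg sa \<longleftrightarrow>
     (\<forall>c d x y. sa c (x + y) = sa c x + sa c y \<and> sa (c + d) x = sa c x + sa d x \<and>
        sa (c * d) x = sa c (sa d x) \<and> sa 1 x = x \<and>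
        sa c (x * y) = sa c x * y \<and> sa c (x * y) = x * sa c y)
     \<and> fin_dim_on sa UNIV"

definition is_mod :: "('k::field \<Rightarrow> 'a::ring_1 \<Rightarrow> 'a) \<Rightarrow> ('k, 'a, 'm::ab_group_add) modl \<Rightarrow> bool" where
  "is_mod sa M \<longleftrightarrow>
     0 \<in> carr M \<and> (\<forall>x\<in>carr M. \<forall>y\<in>carr M. x + y \<in> carr M) \<and> (\<forall>x\<in>carr M. - x \<in> carr M) \<and>
     (\<forall>c. \<forall>x\<in>carr M. smul M c x \<in> carr M) \<and> (\<forall>a. \<forall>x\<in>carr M. act M a x \<in> carr M) \<and>
     (\<forall>c d. \<forall>x\<in>carr M. \<forall>y\<in>carr M.
        smul M c (x + y) = smul M c x + smul M c y \<and> smul M (c + d) x = smul M c x + smul M d x \<and>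
        smul M (c * d) x = smul M c (smul M d x) \<and> smul M 1 x = x) \<and>
     (\<forall>a b c. \<forall>x\<in>carr M. \<forall>y\<in>carr M.
        act M a (x + y) = act M a x + act M a y \<and> act M (a + b) x = act M a x + act M b x \<and>
        act M (a * b) x = act M a (act M b x) \<and> act M 1 x = x \<and>
        act M (sa c a) x = smul M c (act M a x) \<and> act M a (smul M c x) = smul M c (act M a x)) \<and>
     fin_dim_on (smul M) (carr M)"

definition mod_hom :: "('k, 'a, 'm::ab_group_add) modl \<Rightarrow> ('k, 'a, 'n::ab_group_add) modl \<Rightarrow> ('m \<Rightarrow> 'n) \<Rightarrow> bool" where
  "mod_hom M N f \<longleftrightarrow>
     (\<forall>x\<in>carr M. f x \<in> carr N) \<and> (\<forall>x\<in>carr M. \<forall>y\<in>carr M. f (x + y) = f x + f y) \<and>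
     (\<forall>c. \<forall>x\<in>carr M. f (smul M c x) = smul N c (f x)) \<and>
     (\<forall>a. \<forall>x\<in>carr M. f (act M a x) = act N a (f x))"

definition mod_iso :: "('k, 'a, 'm::ab_group_add) modl \<Rightarrow> ('k, 'a, 'n::ab_group_add) modl \<Rightarrow> bool" where
  "mod_iso M N \<longleftrightarrow> (\<exists>f. mod_hom M N f \<and> bij_betw f (carr M) (carr N))"

definition sub_mod :: "('k, 'a, 'm::ab_group_add) modl \<Rightarrow> 'm set \<Rightarrow> bool" where
  "sub_mod M U \<longleftrightarrow> U \<subseteq> carr M \<and> 0 \<in> U \<and> (\<forall>x\<in>U. \<forall>y\<in>U. x + y \<in> U) \<and>
     (\<forall>c. \<forall>x\<in>U. smul M c x \<in> U) \<and> (\<forall>a. \<forall>x\<in>U. act M a x \<in> U)"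

text \<open>Ext^1_A(X, Y) is nonzero iff there is a non-split extension 0 -> Y -> E -> X -> 0
  (Yoneda description); any extension is, as a K-space, Y (+) X, so E may be taken on
  carr Y \<times> carr X with the direct-sum K-structure.\<close>
definition ext1_nonzero :: "('k::field \<Rightarrow> 'a::ring_1 \<Rightarrow> 'a) \<Rightarrow> ('k, 'a, 'x::ab_group_add) modl \<Rightarrow>
    ('k, 'a, 'y::ab_group_add) modl \<Rightarrow> bool" where
  "ext1_nonzero sa X Y \<longleftrightarrow>
     (\<exists>E :: ('k, 'a, 'y \<times> 'x) modl.
        is_mod sa E \<and> carr E = carr Y \<times> carr X \<and>
        (\<forall>c y x. smul E c (y, x) = (smul Y c y, smul X c x)) \<and>
        mod_hom Y E (\<lambda>y. (y, 0)) \<and> mod_hom E X snd \<and>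
        \<not> (\<exists>s. mod_hom X E s \<and> (\<forall>x\<in>carr X. snd (s x) = x)))"

text \<open>Filtration 0 = N_0 \<subseteq> ... \<subseteq> N_t = M by submodules with N_(i+1)/N_i \<cong> Q (\<mu>_i), \<mu>_i \<in> I
  (the subquotient isomorphism expressed as a surjective hom with kernel N_i).\<close>
definition has_filt :: "('k, 'a, 'm::ab_group_add) modl \<Rightarrow> ('i \<Rightarrow> ('k, 'a, 'q::ab_group_add) modl) \<Rightarrow>
    'i set \<Rightarrow> bool" where
  "has_filt M Q I \<longleftrightarrow>
     (\<exists>(t::nat) (Nc :: nat \<Rightarrow> 'm set) (\<mu> :: nat \<Rightarrow> 'i).
        Nc 0 = {0} \<and> Nc t = carr M \<and> (\<forall>i\<le>t. sub_mod M (Nc i)) \<and>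
        (\<forall>i<t. Nc i \<subseteq> Nc (Suc i) \<and> \<mu> i \<in> I \<and>
           (\<exists>f. mod_hom (M\<lparr>carr := Nc (Suc i)\<rparr>) (Q (\<mu> i)) f \<and>
                f ` Nc (Suc i) = carr (Q (\<mu> i)) \<and> {x \<in> Nc (Suc i). f x = 0} = Nc i)))"

definition corner_iso :: "('k::field \<Rightarrow> 's::ring_1 \<Rightarrow> 's) \<Rightarrow> ('k \<Rightarrow> 'h::ring_1 \<Rightarrow> 'h) \<Rightarrow> 's \<Rightarrow> ('h \<Rightarrow> 's) \<Rightarrow> bool" where
  "corner_iso sS sH e \<phi> \<longleftrightarrow>
     bij_betw \<phi> UNIV {e * s * e | s. True} \<and>
     (\<forall>x y c. \<phi> (x + y) = \<phi> x + \<phi> y \<and> \<phi> (x * y) = \<phi> x * \<phi> y \<and> \<phi> (sH c x) = sS c (\<phi> x)) \<and>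
     \<phi> 1 = e"

definition alg_auto :: "('k::field \<Rightarrow> 'h::ring_1 \<Rightarrow> 'h) \<Rightarrow> ('h \<Rightarrow> 'h) \<Rightarrow> bool" where
  "alg_auto sH g \<longleftrightarrow> bij g \<and> g 1 = 1 \<and>
     (\<forall>x y c. g (x + y) = g x + g y \<and> g (x * y) = g x * g y \<and> g (sH c x) = sH c (g x))"

definition alg_anti_auto :: "('k::field \<Rightarrow> 'h::ring_1 \<Rightarrow> 'h) \<Rightarrow> ('h \<Rightarrow> 'h) \<Rightarrow> bool" where
  "alg_anti_auto sH g \<longleftrightarrow> bij g \<and> g 1 = 1 \<and>
     (\<forall>x y c. g (x + y) = g x + g y \<and> g (x * y) = g y * g x \<and> g (sH c x) = sH c (g x))"

definition eS_mod :: "('k \<Rightarrow> 's::ring_1 \<Rightarrow> 's) \<Rightarrow> 's \<Rightarrow> ('h \<Rightarrow> 's) \<Rightarrow> ('k, 'h, 's) modl" where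
  "eS_mod sS e \<phi> = \<lparr>carr = {e * s | s. True}, smul = sS, act = (\<lambda>h x. \<phi> h * x)\<rparr>"

definition Fmod :: "'s \<Rightarrow> ('h \<Rightarrow> 's) \<Rightarrow> ('k, 's, 'm) modl \<Rightarrow> ('k, 'h, 'm) modl" where
  "Fmod e \<phi> M = \<lparr>carr = act M e ` carr M, smul = smul M, act = (\<lambda>h. act M (\<phi> h))\<rparr>"

text \<open>Inverse Schur functor G(N) = Hom_H(eS, N), (s.f)(x) = f(x s); maps are extended by 0.\<close>
definition Gmod :: "('k \<Rightarrow> 's::ring_1 \<Rightarrow> 's) \<Rightarrow> 's \<Rightarrow> ('h \<Rightarrow> 's) \<Rightarrow> ('k, 'h, 'n::ab_group_add) modl \<Rightarrow>
    ('k, 's, 's \<Rightarrow> 'n) modl" where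
  "Gmod sS e \<phi> N =
     \<lparr>carr = {f. mod_hom (eS_mod sS e \<phi>) N f \<and> (\<forall>x. x \<notin> {e * s | s. True} \<longrightarrow> f x = 0)},
      smul = (\<lambda>c f x. if x \<in> {e * s | s. True} then smul N c (f x) else 0),
      act = (\<lambda>s f x. if x \<in> {e * s | s. True} then f (x * s) else 0)\<rparr>"

definition dual_mod :: "('h \<Rightarrow> 'h) \<Rightarrow> ('k::field, 'h, 'v::ab_group_add) modl \<Rightarrow> ('k, 'h, 'v \<Rightarrow> 'k) modl" where
  "dual_mod st V =
     \<lparr>carr = {f. (\<forall>x\<in>carr V. \<forall>y\<in>carr V. f (x + y) = f x + f y) \<and>
                 (\<forall>c. \<forall>x\<in>carr V. f (smul V c x) = c * f x) \<and> (\<forall>x. x \<notin> carr V \<longrightarrow> f x = 0)},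
      smul = (\<lambda>c f x. if x \<in> carr V then c * f x else 0),
      act = (\<lambda>h f x. if x \<in> carr V then f (act V (st h) x) else 0)\<rparr>"

definition twist_mod :: "('h \<Rightarrow> 'h) \<Rightarrow> ('k, 'h, 'v) modl \<Rightarrow> ('k, 'h, 'v) modl" where
  "twist_mod g V = V\<lparr>act := (\<lambda>h. act V (g h))\<rparr>"

text \<open>H admits dual Specht modules: Specht modules Sp indexed by the finite poset Lam,
  automorphism hs (#), anti-automorphism hst ( * ), order-reversing involution tr (^t).\<close>
definition admits_dual_specht :: "('k::field \<Rightarrow> 'h::ring_1 \<Rightarrow> 'h) \<Rightarrow> ('l::order \<Rightarrow> ('k, 'h, 'v::ab_group_add) modl) \<Rightarrow>
    'l set \<Rightarrow> ('h \<Rightarrow> 'h) \<Rightarrow> ('h \<Rightarrow> 'h) \<Rightarrow> ('l \<Rightarrow> 'l) \<Rightarrow> bool" where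
  "admits_dual_specht sH Sp Lam hs hst tr \<longleftrightarrow>
     finite Lam \<and> (\<forall>a\<in>Lam. is_mod sH (Sp a)) \<and>
     (\<forall>a\<in>Lam. \<forall>\<mu>\<in>Lam. a \<noteq> \<mu> \<longrightarrow> \<not> mod_iso (Sp a) (Sp \<mu>)) \<and>
     (\<forall>a\<in>Lam. \<forall>\<mu>\<in>Lam. ext1_nonzero sH (Sp a) (Sp \<mu>) \<longrightarrow> a > \<mu>) \<and>
     alg_auto sH hs \<and> alg_anti_auto sH hst \<and>
     (\<forall>a\<in>Lam. tr a \<in> Lam \<and> tr (tr a) = a) \<and>
     (\<forall>a\<in>Lam. \<forall>\<mu>\<in>Lam. a \<le> \<mu> \<longrightarrow> tr \<mu> \<le> tr a) \<and>
     (\<forall>a\<in>Lam. mod_iso (dual_mod hst (Sp (tr a))) (twist_mod hs (Sp a)))"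

end

theory Submission
  imports Defs HOL.Vector_Spaces
begin


lemma is_modD:
  assumes "is_mod sa M"
  shows mod_zero: "0 \<in> carr M"
    and mod_add: "\<And>x y. x \<in> carr M \<Longrightarrow> y \<in> carr M \<Longrightarrow> x + y \<in> carr M"
    and mod_neg: "\<And>x. x \<in> carr M \<Longrightarrow> - x \<in> carr M"
    and mod_smul: "\<And>c x. x \<in> carr M \<Longrightarrow> smul M c x \<in> carr M"
    and mod_act: "\<And>a x. x \<in> carr M \<Longrightarrow> act M a x \<in> carr M"
    and smul_add: "\<And>c x y. x \<in> carr M \<Longrightarrow> y \<in> carr M \<Longrightarrow> smul M c (x + y) = smul M c x + smul M c y"
    and smul_adds: "\<And>c d x. x \<in> carr M \<Longrightarrow> smul M (c + d) x = smul M c x + smul M d x"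
    and smul_mult: "\<And>c d x. x \<in> carr M \<Longrightarrow> smul M (c * d) x = smul M c (smul M d x)"
    and smul_one: "\<And>x. x \<in> carr M \<Longrightarrow> smul M 1 x = x"
    and act_add: "\<And>a x y. x \<in> carr M \<Longrightarrow> y \<in> carr M \<Longrightarrow> act M a (x + y) = act M a x + act M a y"
    and act_adds: "\<And>a b x. x \<in> carr M \<Longrightarrow> act M (a + b) x = act M a x + act M b x"
    and act_mult: "\<And>a b x. x \<in> carr M \<Longrightarrow> act M (a * b) x = act M a (act M b x)"
    and act_one: "\<And>x. x \<in> carr M \<Longrightarrow> act M 1 x = x"
    and act_sa: "\<And>a c x. x \<in> carr M \<Longrightarrow> act M (sa c a) x = smul M c (act M a x)"
    and act_smul: "\<And>a c x. x \<in> carr M \<Longrightarrow> act M a (smul M c x) = smul M c (act M a x)"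
    and mod_fd: "fin_dim_on (smul M) (carr M)"
  using assms unfolding is_mod_def by blast+

lemma dbl0: "(a::'a::ab_group_add) = a + a \<Longrightarrow> a = 0"
  by (metis add_cancel_left_right)

lemma mod_diff: "is_mod sa M \<Longrightarrow> x \<in> carr M \<Longrightarrow> y \<in> carr M \<Longrightarrow> x - y \<in> carr M"
  by (metis diff_conv_add_uminus mod_add mod_neg)

lemma act_zero: "is_mod sa M \<Longrightarrow> act M a 0 = 0"
proof -
  assume M: "is_mod sa M"
  have "act M a 0 = act M a 0 + act M a 0" using act_add[OF M mod_zero[OF M] mod_zero[OF M]] by simp
  thus ?thesis by (rule dbl0)
qed

lemma act_uminus: "is_mod sa M \<Longrightarrow> x \<in> carr M \<Longrightarrow> act M a (- x) = - act M a x"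
proof -
  assume M: "is_mod sa M" and x: "x \<in> carr M"
  have "act M a x + act M a (- x) = 0" using act_add[OF M x mod_neg[OF M x], of a] act_zero[OF M] by simp
  from minus_unique[OF this] show ?thesis by simp
qed

lemma act_diff: "is_mod sa M \<Longrightarrow> x \<in> carr M \<Longrightarrow> y \<in> carr M \<Longrightarrow> act M a (x - y) = act M a x - act M a y"
  by (metis act_add act_uminus mod_neg diff_conv_add_uminus)

lemma smul_zero: "is_mod sa M \<Longrightarrow> smul M c 0 = 0"
proof -
  assume M: "is_mod sa M"
  have "smul M c 0 = smul M c 0 + smul M c 0" using smul_add[OF M mod_zero[OF M] mod_zero[OF M]] by simp
  thus ?thesis by (rule dbl0)
qed

lemma smul_uminus: "is_mod sa M \<Longrightarrow> x \<in> carr M \<Longrightarrow> smul M c (- x) = - smul M c x"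
proof -
  assume M: "is_mod sa M" and x: "x \<in> carr M"
  have "smul M c x + smul M c (- x) = 0" using smul_add[OF M x mod_neg[OF M x], of c] smul_zero[OF M] by simp
  from minus_unique[OF this] show ?thesis by simp
qed

lemma smul_diff: "is_mod sa M \<Longrightarrow> x \<in> carr M \<Longrightarrow> y \<in> carr M \<Longrightarrow> smul M c (x - y) = smul M c x - smul M c y"
  by (metis smul_add smul_uminus mod_neg diff_conv_add_uminus)

lemma smul_zero_left: "is_mod sa M \<Longrightarrow> x \<in> carr M \<Longrightarrow> smul M 0 x = 0"
proof -
  assume M: "is_mod sa M" and x: "x \<in> carr M"
  have "smul M 0 x = smul M 0 x + smul M 0 x" using smul_adds[OF M x, of 0 0] by (simp only: add_0)
  thus ?thesis by (rule dbl0)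
qed

lemma smul_minus_one: "is_mod sa M \<Longrightarrow> x \<in> carr M \<Longrightarrow> smul M (-1) x = - x"
proof -
  assume M: "is_mod sa M" and x: "x \<in> carr M"
  have "smul M (-1) x + x = 0" using smul_adds[OF M x, of "-1" 1] smul_one[OF M x] smul_zero_left[OF M x] by simp
  thus ?thesis by (simp add: eq_neg_iff_add_eq_0)
qed

lemma act_zero_left: "is_mod sa M \<Longrightarrow> x \<in> carr M \<Longrightarrow> act M 0 x = 0"
proof -
  assume M: "is_mod sa M" and x: "x \<in> carr M"
  have "act M 0 x = act M 0 x + act M 0 x" using act_adds[OF M x, of 0 0] by (simp only: add_0)
  thus ?thesis by (rule dbl0)
qed

lemma smul_comm: "is_mod sa M \<Longrightarrow> x \<in> carr M \<Longrightarrow> smul M c (smul M d x) = smul M d (smul M c x)"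
  by (metis smul_mult mult.commute)

lemma act_sum: assumes "is_mod sa M" "finite A" "\<And>i. i \<in> A \<Longrightarrow> f i \<in> carr M" shows
   "act M a (\<Sum>i\<in>A. f i) = (\<Sum>i\<in>A. act M a (f i)) \<and> (\<Sum>i\<in>A. f i) \<in> carr M"
  using assms(2,3)
proof (induction A rule: finite_induct)
  case empty then show ?case using assms(1) by (simp add: act_zero mod_zero)
next
  case (insert x F)
  hence "f x \<in> carr M" "act M a (sum f F) = (\<Sum>i\<in>F. act M a (f i))" "sum f F \<in> carr M" by auto
  then show ?case using insert(1,2) act_add[OF assms(1)] mod_add[OF assms(1)] by simp
qed

lemma smul_sum: assumes "is_mod sa M" "finite A" "\<And>i. i \<in> A \<Longrightarrow> f i \<in> carr M" shows
   "smul M c (\<Sum>i\<in>A. f i) = (\<Sum>i\<in>A. smul M c (f i))"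
  using assms(2,3)
proof (induction A rule: finite_induct)
  case empty then show ?case using assms(1) by (simp add: smul_zero)
next
  case (insert x F)
  hence "f x \<in> carr M" "smul M c (sum f F) = (\<Sum>i\<in>F. smul M c (f i))" "sum f F \<in> carr M"
    using act_sum[OF assms(1) insert(1)] by auto
  then show ?case using insert(1,2) smul_add[OF assms(1)] by simp
qed

lemma sum_carr: "is_mod sa M \<Longrightarrow> (\<And>i. i \<in> A \<Longrightarrow> f i \<in> carr M) \<Longrightarrow> (\<Sum>i\<in>A. f i) \<in> carr M"
  by (cases "finite A") (auto intro: act_sum[THEN conjunct2] mod_zero)

lemma sub_modD:
  assumes "sub_mod M U"
  shows "U \<subseteq> carr M" "0 \<in> U" "\<And>x y. x \<in> U \<Longrightarrow> y \<in> U \<Longrightarrow> x + y \<in> U"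
    "\<And>c x. x \<in> U \<Longrightarrow> smul M c x \<in> U" "\<And>a x. x \<in> U \<Longrightarrow> act M a x \<in> U"
  using assms unfolding sub_mod_def by blast+

lemma sub_mod_neg: "is_mod sa M \<Longrightarrow> sub_mod M U \<Longrightarrow> x \<in> U \<Longrightarrow> - x \<in> U"
  by (metis sub_modD(1,4) smul_minus_one[of sa M x] subsetD)

lemma sub_mod_diff: "is_mod sa M \<Longrightarrow> sub_mod M U \<Longrightarrow> x \<in> U \<Longrightarrow> y \<in> U \<Longrightarrow> x - y \<in> U"
  by (metis diff_conv_add_uminus sub_modD(3) sub_mod_neg)

lemma sub_mod_sum: assumes "sub_mod M U" "\<And>i. i \<in> A \<Longrightarrow> f i \<in> U" shows "(\<Sum>i\<in>A. f i) \<in> U"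
proof (cases "finite A")
  case True thus ?thesis using assms(2) by (induction A rule: finite_induct) (auto simp: sub_modD[OF assms(1)])
qed (simp add: sub_modD[OF assms(1)])




definition klin :: "('k::field \<Rightarrow> 's \<Rightarrow> 's) \<Rightarrow> 's set \<Rightarrow> ('k, 'h, 'n::ab_group_add) modl \<Rightarrow> 'n set \<Rightarrow> ('s::ab_group_add \<Rightarrow> 'n) \<Rightarrow> bool" where
  "klin sS ES N U L \<longleftrightarrow> (\<forall>x\<in>ES. L x \<in> U) \<and> (\<forall>x\<in>ES. \<forall>y\<in>ES. L (x + y) = L x + L y) \<and>
     (\<forall>c. \<forall>x\<in>ES. L (sS c x) = smul N c (L x))"

locale schur =
  fixes sS :: "'k::field \<Rightarrow> 's::ring_1 \<Rightarrow> 's" and sH :: "'k \<Rightarrow> 'h::ring_1 \<Rightarrow> 'h"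
    and e :: 's and \<phi> :: "'h \<Rightarrow> 's"
  assumes kS: "kalg sS" and kH: "kalg sH" and idem: "e * e = e" and ci: "corner_iso sS sH e \<phi>"
begin

definition "ES = {e * s | s. True}"

lemma ES_iff: "x \<in> ES \<longleftrightarrow> e * x = x"
  unfolding ES_def by (auto simp: mult.assoc[symmetric] idem) (metis)

lemma kS_D: "sS c (x + y) = sS c x + sS c y" "sS (c + d) x = sS c x + sS d x"
  "sS (c * d) x = sS c (sS d x)" "sS 1 x = x" "sS c (x * y) = sS c x * y" "sS c (x * y) = x * sS c y"
  using kS unfolding kalg_def by blast+

lemma kH_D: "sH c (x + y) = sH c x + sH c y" "sH (c + d) x = sH c x + sH d x"
  "sH (c * d) x = sH c (sH d x)" "sH 1 x = x" "sH c (x * y) = sH c x * y" "sH c (x * y) = x * sH c y"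
  using kH unfolding kalg_def by blast+

lemma vs: "vector_space sS" by unfold_locales (simp_all add: kS_D(1,2,4) kS_D(3)[symmetric])

sublocale VS: vector_space sS by (rule vs)

lemma phi_add: "\<phi> (x + y) = \<phi> x + \<phi> y" and phi_mult: "\<phi> (x * y) = \<phi> x * \<phi> y"
  and phi_smul: "\<phi> (sH c x) = sS c (\<phi> x)" and phi_one: "\<phi> 1 = e"
  using ci unfolding corner_iso_def by blast+

lemma phi_bij: "bij_betw \<phi> UNIV {e * s * e | s. True}"
  using ci unfolding corner_iso_def by blast+

lemma phi_zero: "\<phi> 0 = 0"
  using phi_add[of 0 0] by (simp only: add_0 dbl0)

lemma phi_neg: "\<phi> (- x) = - \<phi> x"
  using phi_add[of x "-x"] phi_zero minus_unique[of "\<phi> x" "\<phi> (-x)"] by simp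

lemma phi_e: "e * \<phi> h = \<phi> h" "\<phi> h * e = \<phi> h"
proof -
  obtain s where "\<phi> h = e * s * e" using phi_bij unfolding bij_betw_def by blast
  thus "e * \<phi> h = \<phi> h" "\<phi> h * e = \<phi> h" by (simp_all add: mult.assoc[symmetric] idem) (simp add: mult.assoc idem)
qed

definition phinv :: "'s \<Rightarrow> 'h" where "phinv y = inv \<phi> y"

lemma phi_phinv: "e * y = y \<Longrightarrow> y * e = y \<Longrightarrow> \<phi> (phinv y) = y"
proof -
  assume a: "e * y = y" "y * e = y"
  have "y \<in> range \<phi>" using phi_bij a unfolding bij_betw_def by (metis (mono_tags, lifting) CollectI)
  thus ?thesis unfolding phinv_def by (simp add: f_inv_into_f)
qed

lemma phi_inj: "inj \<phi>" using phi_bij bij_betw_def by blast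

lemma phinv_phi: "phinv (\<phi> h) = h"
  unfolding phinv_def using phi_inj by simp

lemma ES_phi: "x \<in> ES \<Longrightarrow> \<phi> (phinv (x * e)) = x * e"
proof (rule phi_phinv)
  assume "x \<in> ES" hence x: "e * x = x" using ES_iff by blast
  show "e * (x * e) = x * e" by (simp add: mult.assoc[symmetric] x)
  show "x * e * e = x * e" by (simp add: mult.assoc idem)
qed

lemma ES_closed: "0 \<in> ES" "x \<in> ES \<Longrightarrow> y \<in> ES \<Longrightarrow> x + y \<in> ES" "x \<in> ES \<Longrightarrow> - x \<in> ES"
  "x \<in> ES \<Longrightarrow> sS c x \<in> ES" "x \<in> ES \<Longrightarrow> \<phi> h * x \<in> ES" "x \<in> ES \<Longrightarrow> x * s \<in> ES" "e \<in> ES"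
  "x \<in> ES \<Longrightarrow> y \<in> ES \<Longrightarrow> x - y \<in> ES"
  apply (simp_all only: ES_iff)
  by (simp_all add: distrib_left right_diff_distrib kS_D(6)[symmetric] mult.assoc[symmetric] phi_e idem)

lemma ES_mult_e: "x \<in> ES \<Longrightarrow> x * e \<in> ES" using ES_closed(6) .

lemma ES_span_fin: "\<exists>T. finite T \<and> ES \<subseteq> VS.span T"
proof -
  obtain B0 where B0: "finite B0" "\<forall>v. \<exists>c. v = (\<Sum>b\<in>B0. sS (c b) b)"
    using kS unfolding kalg_def fin_dim_on_def by auto
  have "ES \<subseteq> VS.span ((\<lambda>b. e * b) ` B0)"
  proof
    fix x assume "x \<in> ES"
    then obtain s where x: "x = e * s" unfolding ES_def by auto
    obtain c where s: "s = (\<Sum>b\<in>B0. sS (c b) b)" using B0 by auto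
    have "x = (\<Sum>b\<in>B0. sS (c b) (e * b))" unfolding x s by (simp add: sum_distrib_left kS_D(6))
    also have "\<dots> \<in> VS.span ((\<lambda>b. e * b) ` B0)"
      by (intro VS.span_sum VS.span_scale VS.span_base) auto
    finally show "x \<in> VS.span ((\<lambda>b. e * b) ` B0)" .
  qed
  thus ?thesis using B0 by (intro exI[of _ "(\<lambda>b. e * b) ` B0"]) simp
qed

lemma EB_exists: "\<exists>B. finite B \<and> B \<subseteq> ES \<and> VS.independent B \<and> ES \<subseteq> VS.span B"
proof -
  from ES_span_fin obtain T where T: "finite T \<and> ES \<subseteq> VS.span T" ..
  obtain B where B: "B \<subseteq> ES" "VS.independent B" "ES \<subseteq> VS.span B" using VS.basis_exists[of ES] by metis
  have "B \<subseteq> VS.span T" using B(1) T by (meson order_trans)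
  hence "finite B" using VS.independent_span_bound[OF conjunct1[OF T] B(2)] by simp
  thus ?thesis using B by (intro exI[of _ B]) simp
qed

definition EB where "EB = (SOME B. finite B \<and> B \<subseteq> ES \<and> VS.independent B \<and> ES \<subseteq> VS.span B)"

lemma EB: "finite EB" "EB \<subseteq> ES" "VS.independent EB" "ES \<subseteq> VS.span EB"
  using someI_ex[OF EB_exists] unfolding EB_def by simp_all

abbreviation "rep x b \<equiv> VS.representation EB x b"

lemma ES_span: "x \<in> ES \<Longrightarrow> x \<in> VS.span EB" using EB(4) by (rule subsetD)

lemma ES_expand: "x \<in> ES \<Longrightarrow> x = (\<Sum>b\<in>EB. sS (rep x b) b)"
  using VS.sum_representation_eq[OF EB(3) ES_span EB(1) order_refl] by simp

lemma rep_add: "x \<in> ES \<Longrightarrow> y \<in> ES \<Longrightarrow> rep (x + y) b = rep x b + rep y b"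
  using VS.representation_add[OF EB(3) ES_span ES_span] by simp

lemma rep_smul: "x \<in> ES \<Longrightarrow> rep (sS c x) b = c * rep x b"
  using VS.representation_scale[OF EB(3) ES_span] by simp

lemma rep_basis: "b' \<in> EB \<Longrightarrow> rep b' b = (if b = b' then 1 else 0)"
  using VS.representation_basis[OF EB(3)] by simp

definition lext :: "('k, 'x, 'n::ab_group_add) modl \<Rightarrow> ('s \<Rightarrow> 'n) \<Rightarrow> 's \<Rightarrow> 'n" where
  "lext N w x = (\<Sum>b\<in>EB. smul N (rep x b) (w b))"

lemma lext_in: "is_mod sa N \<Longrightarrow> sub_mod N U \<Longrightarrow> (\<And>b. b \<in> EB \<Longrightarrow> w b \<in> U) \<Longrightarrow> lext N w x \<in> U"
  unfolding lext_def by (intro sub_mod_sum) (auto dest: sub_modD(4))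

lemma lext_basis: assumes N: "is_mod sa N" and w: "\<And>b. b \<in> EB \<Longrightarrow> w b \<in> carr N" and b: "b \<in> EB"
  shows "lext N w b = w b"
proof -
  have "lext N w b = (\<Sum>b'\<in>EB. if b' = b then w b else 0)"
    unfolding lext_def rep_basis[OF b]
    by (intro sum.cong refl) (auto simp: smul_one[OF N] smul_zero_left[OF N] w)
  also have "\<dots> = w b" using b EB(1) by simp
  finally show ?thesis .
qed

lemma lext_klin: assumes N: "is_mod sa N" and U: "sub_mod N U" and w: "\<And>b. b \<in> EB \<Longrightarrow> w b \<in> U"
  shows "klin sS ES N U (lext N w)"
  unfolding klin_def
proof (intro conjI ballI allI)
  have wc: "w b \<in> carr N" if "b \<in> EB" for b using w[OF that] sub_modD(1)[OF U] by blast
  show "lext N w x \<in> U" for x by (rule lext_in[OF N U w])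
  show "lext N w (x + y) = lext N w x + lext N w y" if "x \<in> ES" "y \<in> ES" for x y
    unfolding lext_def rep_add[OF that] sum.distrib[symmetric]
    by (intro sum.cong refl) (simp add: smul_adds[OF N] wc)
  show "lext N w (sS c x) = smul N c (lext N w x)" if "x \<in> ES" for c x
    unfolding lext_def rep_smul[OF that] smul_sum[OF N EB(1)] 
    using wc by (simp add: smul_mult[OF N] mod_smul[OF N] smul_sum[OF N EB(1)])
qed

lemma ES_sum: "(\<And>i. i \<in> F \<Longrightarrow> f i \<in> ES) \<Longrightarrow> (\<Sum>i\<in>F. f i) \<in> ES"
proof -
  assume "\<And>i. i \<in> F \<Longrightarrow> f i \<in> ES"
  hence "\<And>i. i \<in> F \<Longrightarrow> e * f i = f i" using ES_iff by blast
  hence "e * (\<Sum>i\<in>F. f i) = (\<Sum>i\<in>F. f i)" by (simp add: sum_distrib_left)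
  thus ?thesis using ES_iff by blast
qed

lemma klin_zero: assumes L: "klin sS ES N U L" shows "L 0 = 0"
proof -
  have "L 0 = L (0 + 0)" by simp
  also have "\<dots> = L 0 + L 0" using L ES_closed(1) unfolding klin_def by blast
  finally show ?thesis by (rule dbl0)
qed

lemma klin_sum: assumes L: "klin sS ES N U L"
  and F: "finite F" "\<And>i. i \<in> F \<Longrightarrow> f i \<in> ES"
  shows "L (\<Sum>i\<in>F. f i) = (\<Sum>i\<in>F. L (f i))"
  using F
proof (induction F rule: finite_induct)
  case empty
  show ?case using klin_zero[OF L] by simp
next
  case (insert x F)
  have "(\<Sum>i\<in>F. f i) \<in> ES" using insert by (intro ES_sum) auto
  moreover have "f x \<in> ES" using insert by auto
  ultimately have "L (f x + (\<Sum>i\<in>F. f i)) = L (f x) + L (\<Sum>i\<in>F. f i)"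
    using L unfolding klin_def by blast
  thus ?case using insert by simp
qed

lemma klin_expand: assumes L: "klin sS ES N U L" and x: "x \<in> ES"
  shows "L x = (\<Sum>b\<in>EB. smul N (rep x b) (L b))"
proof -
  have bES: "b \<in> EB \<Longrightarrow> b \<in> ES" for b using EB(2) by blast
  have "L x = L (\<Sum>b\<in>EB. sS (rep x b) b)" using ES_expand[OF x] by simp
  also have "\<dots> = (\<Sum>b\<in>EB. L (sS (rep x b) b))"
    by (rule klin_sum[OF L EB(1)]) (rule ES_closed(4)[OF bES])
  also have "\<dots> = (\<Sum>b\<in>EB. smul N (rep x b) (L b))"
    using L bES unfolding klin_def by (intro sum.cong refl) blast
  finally show ?thesis .
qed

lemma klin_unique: assumes "klin sS ES N U L1" "klin sS ES N U' L2" "\<And>b. b \<in> EB \<Longrightarrow> L1 b = L2 b"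
  and x: "x \<in> ES" shows "L1 x = L2 x"
  using klin_expand[OF assms(1) x] klin_expand[OF assms(2) x] assms(3) by simp

end


context schur begin

definition hact :: "('k, 'h, 'n::ab_group_add) modl \<Rightarrow> 'n set \<Rightarrow> ('s \<Rightarrow> 'n) \<Rightarrow> bool" where
  "hact N A L \<longleftrightarrow> (\<forall>a. \<forall>x\<in>ES. L (\<phi> a * x) - act N a (L x) \<in> A)"

abbreviation "GG N \<equiv> Gmod sS e \<phi> N"

lemma Gcarr_iff: "f \<in> carr (GG N) \<longleftrightarrow> klin sS ES N (carr N) f \<and> hact N {0} f \<and> (\<forall>x. x \<notin> ES \<longrightarrow> f x = 0)"
  unfolding Gmod_def klin_def hact_def mod_hom_def eS_mod_def ES_def[symmetric] by auto

lemma G_smul: "smul (GG N) c f = (\<lambda>x. if x \<in> ES then smul N c (f x) else 0)"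
  and G_act: "act (GG N) s f = (\<lambda>x. if x \<in> ES then f (x * s) else 0)"
  unfolding Gmod_def ES_def[symmetric] by auto

lemma Gcarr_D: assumes "f \<in> carr (GG N)"
  shows "\<And>x. x \<in> ES \<Longrightarrow> f x \<in> carr N" "\<And>x y. x \<in> ES \<Longrightarrow> y \<in> ES \<Longrightarrow> f (x + y) = f x + f y"
    "\<And>c x. x \<in> ES \<Longrightarrow> f (sS c x) = smul N c (f x)"
    "\<And>a x. x \<in> ES \<Longrightarrow> f (\<phi> a * x) = act N a (f x)" "\<And>x. x \<notin> ES \<Longrightarrow> f x = 0"
  using assms unfolding Gmod_def mod_hom_def eS_mod_def ES_def[symmetric] by auto

lemma Gcarr_I: assumes "\<And>x. x \<in> ES \<Longrightarrow> f x \<in> carr N" "\<And>x y. x \<in> ES \<Longrightarrow> y \<in> ES \<Longrightarrow> f (x + y) = f x + f y"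
    "\<And>c x. x \<in> ES \<Longrightarrow> f (sS c x) = smul N c (f x)"
    "\<And>a x. x \<in> ES \<Longrightarrow> f (\<phi> a * x) = act N a (f x)" "\<And>x. x \<notin> ES \<Longrightarrow> f x = 0"
  shows "f \<in> carr (GG N)"
  using assms unfolding Gmod_def mod_hom_def eS_mod_def ES_def[symmetric] by auto

lemma G_klin: "f \<in> carr (GG N) \<Longrightarrow> klin sS ES N (carr N) f"
  unfolding Gcarr_iff by blast

context
  fixes N :: "('k, 'h, 'n::ab_group_add) modl"
  assumes N: "is_mod sH N"
begin

lemma G_zero: "0 \<in> carr (GG N)"
  by (rule Gcarr_I) (simp_all add: mod_zero[OF N] smul_zero[OF N] act_zero[OF N])

lemma G_add: "f \<in> carr (GG N) \<Longrightarrow> g \<in> carr (GG N) \<Longrightarrow> f + g \<in> carr (GG N)"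
  apply (rule Gcarr_I)
  by (simp_all add: Gcarr_D mod_add[OF N] smul_add[OF N] act_add[OF N])

lemma G_smul_closed: "f \<in> carr (GG N) \<Longrightarrow> smul (GG N) c f \<in> carr (GG N)"
  apply (rule Gcarr_I)
  by (simp_all add: G_smul Gcarr_D mod_smul[OF N] smul_add[OF N] act_smul[OF N] ES_closed
        smul_comm[OF N])

lemma G_act_closed: "f \<in> carr (GG N) \<Longrightarrow> act (GG N) s f \<in> carr (GG N)"
  apply (rule Gcarr_I)
  by (simp_all add: G_act Gcarr_D ES_closed distrib_right kS_D(5)[symmetric] mult.assoc)

lemma G_neg: "f \<in> carr (GG N) \<Longrightarrow> smul (GG N) (-1) f = - f"
  by (rule ext) (auto simp: G_smul Gcarr_D smul_minus_one[OF N])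

lemma G_neg_closed: "f \<in> carr (GG N) \<Longrightarrow> - f \<in> carr (GG N)"
  using G_neg G_smul_closed by metis

lemma G_U: assumes u: "u \<in> carr (GG N)" and x: "x \<in> ES"
  shows "u (x * e) = act N (phinv (x * e)) (u e)"
proof -
  have "x * e = \<phi> (phinv (x * e)) * e" using ES_phi[OF x] by (simp add: mult.assoc idem)
  hence "u (x * e) = u (\<phi> (phinv (x * e)) * e)" by simp
  also have "\<dots> = act N (phinv (x * e)) (u e)" using Gcarr_D(4)[OF u ES_closed(7)] .
  finally show ?thesis .
qed

lemma G_e_kill: assumes u: "u \<in> carr (GG N)" and "u e = 0"
  shows "act (GG N) e u = 0"
  by (rule ext) (simp add: G_act G_U[OF u] assms(2) act_zero[OF N])

end

definition eSe where "eSe y \<longleftrightarrow> e * y = y \<and> y * e = y"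

lemma eSe_phi: "eSe (\<phi> a)" unfolding eSe_def using phi_e by simp

lemma eSe_ES: "x \<in> ES \<Longrightarrow> eSe (x * e)"
  unfolding eSe_def using ES_iff by (metis idem mult.assoc)

lemma eSe_add: "eSe y1 \<Longrightarrow> eSe y2 \<Longrightarrow> eSe (y1 + y2)"
  unfolding eSe_def by (simp add: distrib_left distrib_right)

lemma phinv_add: "eSe y1 \<Longrightarrow> eSe y2 \<Longrightarrow> phinv (y1 + y2) = phinv y1 + phinv y2"
  by (rule injD[OF phi_inj]) (simp add: phi_phinv eSe_def phi_add eSe_add[unfolded eSe_def])

lemma phinv_smul: "eSe y \<Longrightarrow> phinv (sS c y) = sH c (phinv y)"
proof -
  assume y: "eSe y"
  have "eSe (sS c y)" using y unfolding eSe_def by (metis kS_D(5) kS_D(6))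
  thus ?thesis using y by (intro injD[OF phi_inj]) (simp add: phi_phinv eSe_def phi_smul)
qed

lemma phinv_mult: "eSe y \<Longrightarrow> phinv (\<phi> a * y) = a * phinv y"
proof -
  assume y: "eSe y"
  have "eSe (\<phi> a * y)" using y phi_e unfolding eSe_def by (metis mult.assoc)
  thus ?thesis using y by (intro injD[OF phi_inj]) (simp add: phi_phinv eSe_def phi_mult)
qed

lemma phinv_e: "phinv e = 1" using phinv_phi[of 1] phi_one by simp

definition fn :: "('k, 'h, 'n::ab_group_add) modl \<Rightarrow> 'n \<Rightarrow> 's \<Rightarrow> 'n" where
  "fn N n = (\<lambda>x. if x \<in> ES then act N (phinv (x * e)) n else 0)"

lemma fn_carr: assumes N: "is_mod sH N" and n: "n \<in> carr N"
  shows "fn N n \<in> carr (GG N)" "fn N n e = n"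
proof -
  show "fn N n e = n" unfolding fn_def using ES_closed(7) by (simp add: idem phinv_e act_one[OF N n])
  show "fn N n \<in> carr (GG N)"
  proof (rule Gcarr_I)
    fix x assume x: "x \<in> ES"
    show "fn N n x \<in> carr N" unfolding fn_def using x mod_act[OF N n] by simp
    show "fn N n (sS c x) = smul N c (fn N n x)" for c
      unfolding fn_def using x ES_closed(4)[OF x]
      by (simp add: kS_D(5)[symmetric] phinv_smul eSe_ES act_sa[OF N n])
    show "fn N n (\<phi> a * x) = act N a (fn N n x)" for a
      unfolding fn_def using x ES_closed(5)[OF x]
      by (simp add: mult.assoc phinv_mult eSe_ES act_mult[OF N n])
    show "fn N n (x + y) = fn N n x + fn N n y" if y: "y \<in> ES" for y
      unfolding fn_def using x y ES_closed(2)[OF x y]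
      by (simp add: distrib_right phinv_add eSe_ES act_adds[OF N n])
  qed (simp add: fn_def)
qed

end


context schur begin

lemma mod_hom_restr: "mod_hom (M\<lparr>carr := U\<rparr>) Q f \<longleftrightarrow>
     (\<forall>x\<in>U. f x \<in> carr Q) \<and> (\<forall>x\<in>U. \<forall>y\<in>U. f (x + y) = f x + f y) \<and>
     (\<forall>c. \<forall>x\<in>U. f (smul M c x) = smul Q c (f x)) \<and> (\<forall>a. \<forall>x\<in>U. f (act M a x) = act Q a (f x))"
  unfolding mod_hom_def by simp

lemma hom_zero: fixes f :: "'a::ab_group_add \<Rightarrow> 'b::ab_group_add" shows "(\<forall>x\<in>U. \<forall>y\<in>U. f (x + y) = f x + f y) \<Longrightarrow> 0 \<in> U \<Longrightarrow> f 0 = 0"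
proof -
  assume h: "\<forall>x\<in>U. \<forall>y\<in>U. f (x + y) = f x + f y" and z: "0 \<in> U"
  have "f 0 = f (0 + 0)" by simp
  also have "\<dots> = f 0 + f 0" using h z by blast
  finally have "f 0 = f 0 + f 0" .
  thus ?thesis by (rule dbl0)
qed

lemma step_back:
  fixes N :: "('k, 'h, 'n::ab_group_add) modl" and Dm :: "('k, 'h, 'd::ab_group_add) modl"
  assumes N: "is_mod sH N" and Dm: "is_mod sH Dm"
    and A: "sub_mod (GG N) A" and A': "sub_mod (GG N) A'" and AA: "A \<subseteq> A'"
    and psi: "mod_hom ((GG N)\<lparr>carr := A'\<rparr>) (GG Dm) \<psi>" and surj: "\<psi> ` A' = carr (GG Dm)"
    and ker: "{x \<in> A'. \<psi> x = 0} = A"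
  shows "\<exists>\<rho>. mod_hom (N\<lparr>carr := (\<lambda>f. f e) ` A'\<rparr>) Dm \<rho> \<and> \<rho> ` ((\<lambda>f. f e) ` A') = carr Dm \<and>
           {x \<in> (\<lambda>f. f e) ` A'. \<rho> x = 0} = (\<lambda>f. f e) ` A"
proof -
  note psiD = psi[unfolded mod_hom_restr]
  have A'G: "f \<in> A' \<Longrightarrow> f \<in> carr (GG N)" for f using sub_modD(1)[OF A'] by blast
  have psiG: "f \<in> A' \<Longrightarrow> \<psi> f \<in> carr (GG Dm)" for f using psiD by blast
  have psi_add: "f \<in> A' \<Longrightarrow> g \<in> A' \<Longrightarrow> \<psi> (f + g) = \<psi> f + \<psi> g" for f g using psiD by blast
  have psi_smul: "f \<in> A' \<Longrightarrow> \<psi> (smul (GG N) c f) = smul (GG Dm) c (\<psi> f)" for f c using psiD by blast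
  have psi_act: "f \<in> A' \<Longrightarrow> \<psi> (act (GG N) s f) = act (GG Dm) s (\<psi> f)" for f s using psiD by blast
  have psi0: "\<psi> 0 = 0" using hom_zero[of A' \<psi>] psiD sub_modD(2)[OF A'] by blast
  have negA': "f \<in> A' \<Longrightarrow> - f \<in> A'" for f using sub_modD(4)[OF A', of f "-1"] G_neg[OF N A'G] by simp
  have psi_neg: "f \<in> A' \<Longrightarrow> \<psi> (- f) = - \<psi> f" for f
    using psi_smul[of f "-1"] G_neg[OF N A'G, of f] G_neg[OF Dm psiG, of f] by simp
  have WD: "\<psi> f e = \<psi> f' e" if f: "f \<in> A'" and f': "f' \<in> A'" and eq: "f e = f' e" for f f'
  proof -
    define u where "u = f + - f'"
    have uA: "u \<in> A'" unfolding u_def using f f' negA' sub_modD(3)[OF A'] by blast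
    have "u e = 0" unfolding u_def using eq by simp
    hence "act (GG N) e u = 0" using G_e_kill[OF N A'G[OF uA]] by simp
    hence "\<psi> (act (GG N) e u) = 0" using psi0 by (simp only:)
    hence "act (GG Dm) e (\<psi> u) = 0" by (rule trans[OF sym[OF psi_act[OF uA, of e]]])
    hence "act (GG Dm) e (\<psi> u) e = 0" by simp
    hence "\<psi> u e = 0" unfolding G_act using ES_closed(7) idem by simp
    moreover have "\<psi> u = \<psi> f + - \<psi> f'" unfolding u_def using psi_add[OF f negA'[OF f']] psi_neg[OF f'] by simp
    ultimately show ?thesis by simp
  qed
  define ev where "ev = (\<lambda>f::'s \<Rightarrow> 'n. f e)"
  define ch where "ch = (\<lambda>n. SOME f. f \<in> A' \<and> f e = n)"
  have ch: "ch n \<in> A' \<and> ch n e = n" if "n \<in> ev ` A'" for n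
  proof -
    have "\<exists>f. f \<in> A' \<and> f e = n" using that unfolding ev_def by blast
    thus ?thesis unfolding ch_def by (rule someI_ex)
  qed
  define \<rho> where "\<rho> = (\<lambda>n. \<psi> (ch n) e)"
  have rho_eq: "f \<in> A' \<Longrightarrow> \<rho> (f e) = \<psi> f e" for f
    unfolding \<rho>_def using ch[of "f e"] WD[of "ch (f e)" f] unfolding ev_def by blast
  have hom: "mod_hom (N\<lparr>carr := ev ` A'\<rparr>) Dm \<rho>"
    unfolding mod_hom_restr
  proof (intro conjI ballI allI)
    fix n assume n: "n \<in> ev ` A'"
    then obtain f where f: "f \<in> A'" and nf: "n = f e" unfolding ev_def by blast
    show "\<rho> n \<in> carr Dm" unfolding nf rho_eq[OF f] using Gcarr_D(1)[OF psiG[OF f] ES_closed(7)] .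
    show "\<rho> (smul N c n) = smul Dm c (\<rho> n)" for c
    proof -
      have "smul N c n = smul (GG N) c f e" unfolding nf G_smul using ES_closed(7) by simp
      moreover have "smul (GG N) c f \<in> A'" using sub_modD(4)[OF A' f] .
      ultimately have "\<rho> (smul N c n) = \<psi> (smul (GG N) c f) e" using rho_eq by simp
      also have "\<dots> = smul (GG Dm) c (\<psi> f) e" by (simp only: psi_smul[OF f])
      also have "\<dots> = smul Dm c (\<psi> f e)" unfolding G_smul using ES_closed(7) by simp
      finally show ?thesis unfolding nf rho_eq[OF f] .
    qed
    show "\<rho> (act N a n) = act Dm a (\<rho> n)" for a
    proof -
      have "act N a n = f (\<phi> a * e)" unfolding nf using Gcarr_D(4)[OF A'G[OF f] ES_closed(7)] by simp
      also have "\<dots> = act (GG N) (\<phi> a) f e" unfolding G_act using ES_closed(7) by (simp add: phi_e)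
      finally have 1: "act N a n = act (GG N) (\<phi> a) f e" .
      have "act (GG N) (\<phi> a) f \<in> A'" using sub_modD(5)[OF A' f] .
      hence "\<rho> (act N a n) = \<psi> (act (GG N) (\<phi> a) f) e" using rho_eq 1 by simp
      also have "\<dots> = act (GG Dm) (\<phi> a) (\<psi> f) e" by (simp only: psi_act[OF f])
      also have "\<dots> = \<psi> f (\<phi> a * e)" unfolding G_act using ES_closed(7) by (simp add: phi_e)
      also have "\<dots> = act Dm a (\<psi> f e)" using Gcarr_D(4)[OF psiG[OF f] ES_closed(7)] .
      finally show ?thesis unfolding nf rho_eq[OF f] .
    qed
    fix m assume m: "m \<in> ev ` A'"
    then obtain g where g: "g \<in> A'" and mg: "m = g e" unfolding ev_def by blast
    have "f + g \<in> A'" using sub_modD(3)[OF A' f g] .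
    hence "\<rho> (n + m) = \<psi> (f + g) e" using rho_eq[of "f + g"] unfolding nf mg by simp
    thus "\<rho> (n + m) = \<rho> n + \<rho> m" unfolding nf mg rho_eq[OF f] rho_eq[OF g] psi_add[OF f g] by simp
  qed
  have im: "\<rho> ` (ev ` A') = carr Dm"
  proof
    show "\<rho> ` ev ` A' \<subseteq> carr Dm" using hom unfolding mod_hom_restr by blast
    show "carr Dm \<subseteq> \<rho> ` ev ` A'"
    proof
      fix d assume d: "d \<in> carr Dm"
      have "fn Dm d \<in> \<psi> ` A'" unfolding surj by (rule fn_carr(1)[OF Dm d])
      then obtain f where f2: "fn Dm d = \<psi> f" and f1: "f \<in> A'" by (rule imageE)
      have "\<rho> (ev f) = d" unfolding ev_def rho_eq[OF f1] f2[symmetric] fn_carr(2)[OF Dm d] ..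
      thus "d \<in> \<rho> ` ev ` A'" using f1 by blast
    qed
  qed
  have kr: "{x \<in> ev ` A'. \<rho> x = 0} = ev ` A"
  proof
    show "ev ` A \<subseteq> {x \<in> ev ` A'. \<rho> x = 0}"
    proof
      fix n assume "n \<in> ev ` A"
      then obtain f where f: "f \<in> A" "n = f e" unfolding ev_def by blast
      have fA': "f \<in> A'" using f AA by blast
      have "\<psi> f = 0" using f(1) ker by blast
      thus "n \<in> {x \<in> ev ` A'. \<rho> x = 0}" using rho_eq[OF fA'] f fA' unfolding ev_def by auto
    qed
    show "{x \<in> ev ` A'. \<rho> x = 0} \<subseteq> ev ` A"
    proof
      fix n assume n: "n \<in> {x \<in> ev ` A'. \<rho> x = 0}"
      then obtain f where f: "f \<in> A'" "n = f e" unfolding ev_def by blast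
      have "\<psi> f e = 0" using n rho_eq[OF f(1)] f(2) by simp
      hence "act (GG Dm) e (\<psi> f) = 0" using G_e_kill[OF Dm psiG[OF f(1)]] by simp
      hence "\<psi> (act (GG N) e f) = 0" using psi_act[OF f(1)] by simp
      moreover have "act (GG N) e f \<in> A'" using sub_modD(5)[OF A' f(1)] .
      ultimately have "act (GG N) e f \<in> A" using ker by blast
      moreover have "act (GG N) e f e = n" unfolding G_act f(2) using ES_closed(7) by (simp add: idem)
      ultimately show "n \<in> ev ` A" unfolding ev_def by force
    qed
  qed
  show ?thesis using hom im kr unfolding ev_def by blast
qed

end


context schur begin

lemma ev_sub:
  fixes N :: "('k, 'h, 'n::ab_group_add) modl"
  assumes N: "is_mod sH N" and A: "sub_mod (GG N) A"
  shows "sub_mod N ((\<lambda>f. f e) ` A)"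
  unfolding sub_mod_def
proof (intro conjI ballI allI)
  have AG: "f \<in> A \<Longrightarrow> f \<in> carr (GG N)" for f using sub_modD(1)[OF A] by blast
  show "(\<lambda>f. f e) ` A \<subseteq> carr N" using Gcarr_D(1)[OF AG ES_closed(7)] by blast
  show "0 \<in> (\<lambda>f. f e) ` A" by (rule image_eqI[of _ _ 0]) (simp_all add: sub_modD(2)[OF A])
  fix x assume "x \<in> (\<lambda>f. f e) ` A"
  then obtain f where x: "x = f e" and f: "f \<in> A" by (rule imageE)
  show "smul N c x \<in> (\<lambda>f. f e) ` A" for c
  proof -
    have "smul N c x = smul (GG N) c f e" unfolding x G_smul using ES_closed(7) by simp
    thus ?thesis using sub_modD(4)[OF A f] by blast
  qed
  show "act N a x \<in> (\<lambda>f. f e) ` A" for a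
  proof -
    have "act N a x = f (\<phi> a * e)" unfolding x using Gcarr_D(4)[OF AG[OF f] ES_closed(7)] by simp
    also have "\<dots> = act (GG N) (\<phi> a) f e" unfolding G_act using ES_closed(7) by (simp add: phi_e)
    finally show ?thesis using sub_modD(5)[OF A f] by blast
  qed
  fix y assume "y \<in> (\<lambda>f. f e) ` A"
  then obtain g where y: "y = g e" and g: "g \<in> A" by (rule imageE)
  have "x + y = (f + g) e" unfolding x y by simp
  thus "x + y \<in> (\<lambda>f. f e) ` A" using sub_modD(3)[OF A f g] by blast
qed

lemma filt_back:
  fixes N :: "('k, 'h, 'n::ab_group_add) modl" and D :: "'l \<Rightarrow> ('k, 'h, 'd::ab_group_add) modl"
  assumes N: "is_mod sH N" and D: "\<forall>\<mu>\<in>Lam. is_mod sH (D \<mu>)"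
    and F: "has_filt (GG N) (\<lambda>\<mu>. GG (D \<mu>)) Lam"
  shows "has_filt N D Lam"
proof -
  obtain t Gc \<mu> where H: "Gc 0 = {0} \<and> Gc t = carr (GG N) \<and> (\<forall>i\<le>t. sub_mod (GG N) (Gc i)) \<and>
      (\<forall>i<t. Gc i \<subseteq> Gc (Suc i) \<and> \<mu> i \<in> Lam \<and>
           (\<exists>f. mod_hom ((GG N)\<lparr>carr := Gc (Suc i)\<rparr>) (GG (D (\<mu> i))) f \<and>
                f ` Gc (Suc i) = carr (GG (D (\<mu> i))) \<and> {x \<in> Gc (Suc i). f x = 0} = Gc i))"
    using F unfolding has_filt_def by (elim exE) (rule that, assumption)
  note G0 = conjunct1[OF H] and Gt = conjunct1[OF conjunct2[OF H]]
   and Gs = conjunct1[OF conjunct2[OF conjunct2[OF H]]] and Gi = conjunct2[OF conjunct2[OF conjunct2[OF H]]]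
  define Nc where "Nc = (\<lambda>i. (\<lambda>f. f e) ` Gc i)"
  have "Nc 0 = {0}" unfolding Nc_def G0 by simp
  moreover have "Nc t = carr N"
  proof
    show "Nc t \<subseteq> carr N" unfolding Nc_def Gt using Gcarr_D(1)[OF _ ES_closed(7)] by blast
    show "carr N \<subseteq> Nc t"
    proof
      fix n assume n: "n \<in> carr N"
      show "n \<in> Nc t" unfolding Nc_def Gt using fn_carr[OF N n] by (metis image_eqI)
    qed
  qed
  moreover have "\<forall>i\<le>t. sub_mod N (Nc i)" unfolding Nc_def using ev_sub[OF N] Gs by blast
  moreover have "\<forall>i<t. Nc i \<subseteq> Nc (Suc i) \<and> \<mu> i \<in> Lam \<and>
           (\<exists>f. mod_hom (N\<lparr>carr := Nc (Suc i)\<rparr>) (D (\<mu> i)) f \<and>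
                f ` Nc (Suc i) = carr (D (\<mu> i)) \<and> {x \<in> Nc (Suc i). f x = 0} = Nc i)"
  proof (intro allI impI conjI)
    fix i assume i: "i < t"
    show "Nc i \<subseteq> Nc (Suc i)" unfolding Nc_def using Gi i by blast
    show "\<mu> i \<in> Lam" using Gi i by blast
    obtain \<psi> where psi: "mod_hom ((GG N)\<lparr>carr := Gc (Suc i)\<rparr>) (GG (D (\<mu> i))) \<psi>"
       "\<psi> ` Gc (Suc i) = carr (GG (D (\<mu> i)))" "{x \<in> Gc (Suc i). \<psi> x = 0} = Gc i"
      using Gi i by blast
    show "\<exists>f. mod_hom (N\<lparr>carr := Nc (Suc i)\<rparr>) (D (\<mu> i)) f \<and>
                f ` Nc (Suc i) = carr (D (\<mu> i)) \<and> {x \<in> Nc (Suc i). f x = 0} = Nc i"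
      unfolding Nc_def
      by (rule step_back[OF N _ _ _ _ psi]) (use D Gi Gs i in auto)
  qed
  ultimately show ?thesis unfolding has_filt_def
    by (intro exI[of _ t] exI[of _ Nc] exI[of _ \<mu>]) (intro conjI)
qed

end


definition premod :: "('k::field \<Rightarrow> 'v::ab_group_add \<Rightarrow> 'v) \<Rightarrow> 'v set \<Rightarrow> bool" where
  "premod sm V \<longleftrightarrow> 0 \<in> V \<and> (\<forall>x\<in>V. \<forall>y\<in>V. x + y \<in> V) \<and> (\<forall>c. \<forall>x\<in>V. sm c x \<in> V) \<and>
     (\<forall>c d. \<forall>x\<in>V. \<forall>y\<in>V. sm c (x + y) = sm c x + sm c y \<and> sm (c + d) x = sm c x + sm d x \<and>
        sm (c * d) x = sm c (sm d x) \<and> sm 1 x = x)"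

lemma is_mod_premod: "is_mod sa M \<Longrightarrow> premod (smul M) (carr M)"
  unfolding premod_def is_mod_def by blast

lemma premod_sum: assumes P: "premod sm V" and f: "\<And>i. i \<in> A \<Longrightarrow> f i \<in> V" shows "(\<Sum>i\<in>A. f i) \<in> V"
proof (cases "finite A")
  case True thus ?thesis using f
    by (induction A rule: finite_induct) (use P in \<open>auto simp: premod_def\<close>)
qed (use P in \<open>simp add: premod_def\<close>)

lemma premod_smul0: assumes P: "premod sm V" and x: "x \<in> V" shows "sm 0 x = 0"
proof -
  have "sm 0 x = sm (0 + 0) x" by simp
  also have "\<dots> = sm 0 x + sm 0 x" using P x unfolding premod_def by blast
  finally show ?thesis by (rule dbl0)
qed

lemma premod_smul_sum_left: assumes P: "premod sm V" and x: "x \<in> V"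
  shows "sm (\<Sum>i\<in>A. c i) x = (\<Sum>i\<in>A. sm (c i) x)"
proof (cases "finite A")
  case True thus ?thesis
  proof (induction A rule: finite_induct)
    case empty show ?case using premod_smul0[OF P x] by simp
  next
    case (insert a F)
    have "sm (c a + sum c F) x = sm (c a) x + sm (sum c F) x" using P x unfolding premod_def by blast
    thus ?case using insert by simp
  qed
qed (simp add: premod_smul0[OF P x])

lemma fin_dim_image:
  assumes PV: "premod sm V" and PW: "premod sn W" and fd: "fin_dim_on sm V"
    and LW: "\<And>x. x \<in> V \<Longrightarrow> L x \<in> W" and Ladd: "\<And>x y. x \<in> V \<Longrightarrow> y \<in> V \<Longrightarrow> L (x + y) = L x + L y"
    and Lsm: "\<And>c x. x \<in> V \<Longrightarrow> L (sm c x) = sn c (L x)"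
  shows "fin_dim_on sn (L ` V)"
proof -
  obtain B where B: "finite B" "B \<subseteq> V" "\<forall>v\<in>V. \<exists>c. v = (\<Sum>b\<in>B. sm (c b) b)"
    using fd unfolding fin_dim_on_def by blast
  have Lsum: "L (\<Sum>i\<in>A. f i) = (\<Sum>i\<in>A. L (f i))" if "finite A" "A \<subseteq> V" "\<And>i. i \<in> A \<Longrightarrow> f i \<in> V" for A f
    using that
  proof (induction A rule: finite_induct)
    case empty
    have "L 0 = L (0 + 0)" by simp
    also have "\<dots> = L 0 + L 0" using Ladd PV unfolding premod_def by blast
    finally show ?case by (simp add: dbl0)
  next
    case (insert a F)
    have "(\<Sum>i\<in>F. f i) \<in> V" using insert by (intro premod_sum[OF PV]) auto
    thus ?case using insert Ladd by simp
  qed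
  show ?thesis unfolding fin_dim_on_def
  proof (rule exI[of _ "L ` B"], intro conjI ballI)
    show "finite (L ` B)" using B by simp
    show "L ` B \<subseteq> L ` V" using B by blast
    fix w assume "w \<in> L ` V"
    then obtain v where w: "w = L v" and v: "v \<in> V" by (rule imageE)
    obtain c where c: "v = (\<Sum>b\<in>B. sm (c b) b)" using B v by blast
    have BV: "b \<in> B \<Longrightarrow> b \<in> V" for b using B by blast
    have smV: "b \<in> B \<Longrightarrow> sm k b \<in> V" for b k using BV PV unfolding premod_def by blast
    have "w = (\<Sum>b\<in>B. sn (c b) (L b))" unfolding w c using Lsum[OF B(1) B(2) smV] Lsm BV by simp
    also have "\<dots> = (\<Sum>b'\<in>L ` B. \<Sum>b\<in>{b \<in> B. L b = b'}. sn (c b) (L b))"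
      by (rule sum.image_gen[OF B(1)])
    also have "\<dots> = (\<Sum>b'\<in>L ` B. sn (\<Sum>b\<in>{b \<in> B. L b = b'}. c b) b')"
    proof (intro sum.cong refl)
      fix b' assume b': "b' \<in> L ` B"
      have "b' \<in> W" using b' LW BV by blast
      hence "sn (\<Sum>b\<in>{b \<in> B. L b = b'}. c b) b' = (\<Sum>b\<in>{b \<in> B. L b = b'}. sn (c b) b')"
        by (rule premod_smul_sum_left[OF PW])
      thus "(\<Sum>b\<in>{b \<in> B. L b = b'}. sn (c b) (L b)) = sn (\<Sum>b\<in>{b \<in> B. L b = b'}. c b) b'"
        by simp
    qed
    finally have wc: "w = (\<Sum>b'\<in>L ` B. sn ((\<lambda>b'. \<Sum>b\<in>{b \<in> B. L b = b'}. c b) b') b')" by simp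
    show "\<exists>c. w = (\<Sum>b\<in>L ` B. sn (c b) b)"
      by (rule exI[where x="\<lambda>b'. \<Sum>b\<in>{b \<in> B. L b = b'}. c b"]) (rule wc)
  qed
qed

context schur begin

abbreviation "FF M \<equiv> Fmod e \<phi> M"

lemma F_simps: "carr (FF M) = act M e ` carr M" "smul (FF M) = smul M" "act (FF M) a = act M (\<phi> a)"
  unfolding Fmod_def by simp_all

lemma F_is_mod:
  fixes M :: "('k, 's, 'm::ab_group_add) modl"
  assumes M: "is_mod sS M"
  shows "is_mod sH (FF M)"
proof -
  have ee: "x \<in> act M e ` carr M \<Longrightarrow> act M e x = x" for x
  proof -
    assume "x \<in> act M e ` carr M"
    then obtain m where x: "x = act M e m" and m: "m \<in> carr M" by (rule imageE)
    show ?thesis unfolding x using act_mult[OF M m, where a=e and b=e] idem by simp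
  qed
  have sub: "act M e ` carr M \<subseteq> carr M" using mod_act[OF M] by blast
  have cl: "0 \<in> act M e ` carr M" "\<And>x y. x \<in> act M e ` carr M \<Longrightarrow> y \<in> act M e ` carr M \<Longrightarrow> x + y \<in> act M e ` carr M"
     "\<And>x. x \<in> act M e ` carr M \<Longrightarrow> - x \<in> act M e ` carr M"
     "\<And>x c. x \<in> act M e ` carr M \<Longrightarrow> smul M c x \<in> act M e ` carr M"
     "\<And>x a. x \<in> act M e ` carr M \<Longrightarrow> act M (\<phi> a) x \<in> act M e ` carr M"
  proof -
    show "0 \<in> act M e ` carr M" using act_zero[OF M, of e] mod_zero[OF M] by (metis image_eqI)
    fix x assume "x \<in> act M e ` carr M"
    then obtain m where x: "x = act M e m" and m: "m \<in> carr M" by (rule imageE)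
    show "- x \<in> act M e ` carr M" unfolding x using act_uminus[OF M m] mod_neg[OF M m] by (metis image_eqI)
    show "smul M c x \<in> act M e ` carr M" for c
      unfolding x using act_smul[OF M m] mod_smul[OF M m] by (metis image_eqI)
    show "act M (\<phi> a) x \<in> act M e ` carr M" for a
    proof -
      have "act M (\<phi> a) x = act M e (act M (\<phi> a) m)"
        unfolding x using act_mult[OF M m] phi_e by metis
      thus ?thesis using mod_act[OF M m] by blast
    qed
    fix y assume "y \<in> act M e ` carr M"
    then obtain n where y: "y = act M e n" and n: "n \<in> carr M" by (rule imageE)
    show "x + y \<in> act M e ` carr M" unfolding x y using act_add[OF M m n] mod_add[OF M m n] by (metis image_eqI)
  qed
  have fd: "fin_dim_on (smul M) (act M e ` carr M)"
    by (rule fin_dim_image[OF is_mod_premod[OF M] is_mod_premod[OF M] mod_fd[OF M]])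
       (simp_all add: mod_act[OF M] act_add[OF M] act_smul[OF M])
  show ?thesis unfolding is_mod_def F_simps
  proof (intro conjI ballI allI fd cl)
    fix x y a b c d assume x: "x \<in> act M e ` carr M" and y: "y \<in> act M e ` carr M"
    have xM: "x \<in> carr M" and yM: "y \<in> carr M" using x y sub by blast+
    show "smul M c (x + y) = smul M c x + smul M c y" by (rule smul_add[OF M xM yM])
    show "smul M (c + d) x = smul M c x + smul M d x" by (rule smul_adds[OF M xM])
    show "smul M (c * d) x = smul M c (smul M d x)" by (rule smul_mult[OF M xM])
    show "smul M 1 x = x" by (rule smul_one[OF M xM])
    show "act M (\<phi> a) (x + y) = act M (\<phi> a) x + act M (\<phi> a) y" by (rule act_add[OF M xM yM])
    show "act M (\<phi> (a + b)) x = act M (\<phi> a) x + act M (\<phi> b) x" unfolding phi_add by (rule act_adds[OF M xM])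
    show "act M (\<phi> (a * b)) x = act M (\<phi> a) (act M (\<phi> b) x)" unfolding phi_mult by (rule act_mult[OF M xM])
    show "act M (\<phi> 1) x = x" unfolding phi_one by (rule ee[OF x])
    show "act M (\<phi> (sH c a)) x = smul M c (act M (\<phi> a) x)" unfolding phi_smul by (rule act_sa[OF M xM])
    show "act M (\<phi> a) (smul M c x) = smul M c (act M (\<phi> a) x)" by (rule act_smul[OF M xM])
  qed
qed

end


lemma hom_diff: fixes f :: "'a::ab_group_add \<Rightarrow> 'b::ab_group_add"
  assumes "\<forall>x\<in>U. \<forall>y\<in>U. f (x + y) = f x + f y" "a \<in> U" "b \<in> U" "a - b \<in> U"
  shows "f (a - b) = f a - f b"
proof -
  have "f (a - b) + f b = f (a - b + b)" using assms by metis
  thus ?thesis by (simp add: eq_diff_eq)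
qed

context schur begin

definition eta :: "('k, 's, 'm::ab_group_add) modl \<Rightarrow> 'm \<Rightarrow> 's \<Rightarrow> 'm" where
  "eta M m = (\<lambda>x. if x \<in> ES then act M x m else 0)"

context
  fixes M :: "('k, 's, 'm::ab_group_add) modl"
  assumes M: "is_mod sS M"
begin

lemma eta_carr: "m \<in> carr M \<Longrightarrow> eta M m \<in> carr (GG (FF M))"
proof (rule Gcarr_I)
  fix x assume m: "m \<in> carr M" and x: "x \<in> ES"
  have "act M x m = act M e (act M x m)" using act_mult[OF M m, where a=e and b=x] x ES_iff by simp
  thus "eta M m x \<in> carr (FF M)" unfolding eta_def F_simps using x mod_act[OF M m] by auto
  show "eta M m (sS c x) = smul (FF M) c (eta M m x)" for c
    unfolding eta_def F_simps using x ES_closed(4)[OF x] act_sa[OF M m] by simp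
  show "eta M m (\<phi> a * x) = act (FF M) a (eta M m x)" for a
    unfolding eta_def F_simps using x ES_closed(5)[OF x] act_mult[OF M m] by simp
  show "eta M m (x + y) = eta M m x + eta M m y" if "y \<in> ES" for y
    unfolding eta_def using x that ES_closed(2)[OF x that] act_adds[OF M m] by simp
qed (simp add: eta_def)

lemma eta_add: "m \<in> carr M \<Longrightarrow> n \<in> carr M \<Longrightarrow> eta M (m + n) = eta M m + eta M n"
  by (rule ext) (simp add: eta_def act_add[OF M])

lemma eta_smul: "m \<in> carr M \<Longrightarrow> eta M (smul M c m) = smul (GG (FF M)) c (eta M m)"
  by (rule ext) (simp add: eta_def act_smul[OF M] G_smul F_simps)

lemma eta_act: "m \<in> carr M \<Longrightarrow> eta M (act M s m) = act (GG (FF M)) s (eta M m)"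
  by (rule ext) (simp add: eta_def act_mult[OF M] G_act ES_closed(6))

lemma eta_diff: "m \<in> carr M \<Longrightarrow> n \<in> carr M \<Longrightarrow> eta M (m - n) = eta M m - eta M n"
  by (rule ext) (simp add: eta_def act_diff[OF M])

end

end


context schur begin

lemma GF_iso:
  fixes M :: "('k, 's, 'm::ab_group_add) modl" and D :: "'l \<Rightarrow> ('k, 'h, 'd::ab_group_add) modl"
  assumes M: "is_mod sS M" and D: "\<forall>\<mu>\<in>Lam. is_mod sH (D \<mu>)"
    and F: "has_filt M (\<lambda>\<mu>. GG (D \<mu>)) Lam"
  shows "mod_iso (GG (FF M)) M"
proof -
  obtain t Mc \<mu> where H: "Mc 0 = {0} \<and> Mc t = carr M \<and> (\<forall>i\<le>t. sub_mod M (Mc i)) \<and>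
      (\<forall>i<t. Mc i \<subseteq> Mc (Suc i) \<and> \<mu> i \<in> Lam \<and>
           (\<exists>f. mod_hom (M\<lparr>carr := Mc (Suc i)\<rparr>) (GG (D (\<mu> i))) f \<and>
                f ` Mc (Suc i) = carr (GG (D (\<mu> i))) \<and> {x \<in> Mc (Suc i). f x = 0} = Mc i))"
    using F unfolding has_filt_def by (elim exE) (rule that, assumption)
  note M0 = conjunct1[OF H] and Mt = conjunct1[OF conjunct2[OF H]]
   and Ms = conjunct1[OF conjunct2[OF conjunct2[OF H]]] and Mi = conjunct2[OF conjunct2[OF conjunct2[OF H]]]
  have FM: "is_mod sH (FF M)" by (rule F_is_mod[OF M])
  have McM: "i \<le> t \<Longrightarrow> m \<in> Mc i \<Longrightarrow> m \<in> carr M" for i m using Ms sub_modD(1) by blast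
  have step: "\<exists>\<psi>. (\<forall>m\<in>Mc (Suc j). \<psi> m \<in> carr (GG (D (\<mu> j)))) \<and>
       (\<forall>m\<in>Mc (Suc j). \<forall>n\<in>Mc (Suc j). \<psi> (m + n) = \<psi> m + \<psi> n \<and> \<psi> (m - n) = \<psi> m - \<psi> n) \<and>
       (\<forall>c. \<forall>m\<in>Mc (Suc j). \<psi> (smul M c m) = smul (GG (D (\<mu> j))) c (\<psi> m)) \<and>
       (\<forall>s. \<forall>m\<in>Mc (Suc j). \<psi> (act M s m) = act (GG (D (\<mu> j))) s (\<psi> m)) \<and>
       \<psi> ` Mc (Suc j) = carr (GG (D (\<mu> j))) \<and> {x \<in> Mc (Suc j). \<psi> x = 0} = Mc j \<and> \<psi> 0 = 0 \<and>
       is_mod sH (D (\<mu> j))" if j: "j < t" for j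
  proof -
    obtain \<psi> where psi: "mod_hom (M\<lparr>carr := Mc (Suc j)\<rparr>) (GG (D (\<mu> j))) \<psi>"
       "\<psi> ` Mc (Suc j) = carr (GG (D (\<mu> j)))" "{x \<in> Mc (Suc j). \<psi> x = 0} = Mc j"
      using Mi j by blast
    have S: "sub_mod M (Mc (Suc j))" using Ms j by simp
    note pD = psi(1)[unfolded mod_hom_restr]
    have add: "\<forall>m\<in>Mc (Suc j). \<forall>n\<in>Mc (Suc j). \<psi> (m + n) = \<psi> m + \<psi> n" using pD by blast
    show ?thesis
    proof (rule exI[of _ \<psi>], intro conjI ballI allI)
      show "\<psi> ` Mc (Suc j) = carr (GG (D (\<mu> j)))" "{x \<in> Mc (Suc j). \<psi> x = 0} = Mc j" using psi by simp_all
      show "\<psi> 0 = 0" by (rule hom_zero[OF add sub_modD(2)[OF S]])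
      show "is_mod sH (D (\<mu> j))" using D Mi j by blast
      fix m assume m: "m \<in> Mc (Suc j)"
      show "\<psi> m \<in> carr (GG (D (\<mu> j)))" using pD m by blast
      show "\<psi> (smul M c m) = smul (GG (D (\<mu> j))) c (\<psi> m)" for c using pD m by blast
      show "\<psi> (act M s m) = act (GG (D (\<mu> j))) s (\<psi> m)" for s using pD m by blast
      fix n assume n: "n \<in> Mc (Suc j)"
      show "\<psi> (m + n) = \<psi> m + \<psi> n" using add m n by blast
      show "\<psi> (m - n) = \<psi> m - \<psi> n" by (rule hom_diff[OF add m n sub_mod_diff[OF M S m n]])
    qed
  qed
  have inj0: "\<forall>m\<in>Mc j. eta M m = 0 \<longrightarrow> m = 0" if "j \<le> t" for j
    using that
  proof (induction j)
    case 0 thus ?case using M0 by simp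
  next
    case (Suc j)
    hence j: "j < t" by simp
    obtain \<psi> where P: "(\<forall>m\<in>Mc (Suc j). \<psi> m \<in> carr (GG (D (\<mu> j)))) \<and>
       (\<forall>m\<in>Mc (Suc j). \<forall>n\<in>Mc (Suc j). \<psi> (m + n) = \<psi> m + \<psi> n \<and> \<psi> (m - n) = \<psi> m - \<psi> n) \<and>
       (\<forall>c. \<forall>m\<in>Mc (Suc j). \<psi> (smul M c m) = smul (GG (D (\<mu> j))) c (\<psi> m)) \<and>
       (\<forall>s. \<forall>m\<in>Mc (Suc j). \<psi> (act M s m) = act (GG (D (\<mu> j))) s (\<psi> m)) \<and>
       \<psi> ` Mc (Suc j) = carr (GG (D (\<mu> j))) \<and> {x \<in> Mc (Suc j). \<psi> x = 0} = Mc j \<and> \<psi> 0 = 0 \<and>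
       is_mod sH (D (\<mu> j))"
      using step[OF j] by (elim exE) (rule that, assumption)
    show ?case
    proof (intro ballI impI)
      fix m assume m: "m \<in> Mc (Suc j)" and em: "eta M m = 0"
      have u: "\<psi> m \<in> carr (GG (D (\<mu> j)))" using P m by blast
      have "\<psi> m = 0"
      proof
        fix x show "\<psi> m x = 0 x"
        proof (cases "x \<in> ES")
          case True
          have "act M x m = 0" using em True fun_cong[OF em, of x] unfolding eta_def by simp
          hence "\<psi> (act M x m) = 0" using P by simp
          hence "act (GG (D (\<mu> j))) x (\<psi> m) = 0" using P m by metis
          hence "act (GG (D (\<mu> j))) x (\<psi> m) e = 0" by simp
          hence "\<psi> m (e * x) = 0" unfolding G_act using ES_closed(7) by simp
          thus ?thesis using True ES_iff by simp
        next
          case False thus ?thesis using Gcarr_D(5)[OF u] by simp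
        qed
      qed
      hence "m \<in> Mc j" using P m by blast
      thus "m = 0" using Suc.IH[OF less_imp_le[OF j]] em by blast
    qed
  qed
  have inj: "inj_on (eta M) (carr M)"
  proof (rule inj_onI)
    fix m n assume m: "m \<in> carr M" and n: "n \<in> carr M" and eq: "eta M m = eta M n"
    have "eta M (m - n) = 0" using eta_diff[OF M m n] eq by simp
    moreover have "m - n \<in> Mc t" using Mt mod_diff[OF M m n] by simp
    ultimately have "m - n = 0" using inj0[of t] by blast
    thus "m = n" by simp
  qed
  have ee: "x \<in> carr (FF M) \<Longrightarrow> act M e x = x" for x
  proof -
    assume "x \<in> carr (FF M)"
    then obtain m where x: "x = act M e m" and m: "m \<in> carr M" unfolding F_simps by (rule imageE)
    show ?thesis unfolding x using act_mult[OF M m, where a=e and b=e] idem by simp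
  qed
  have FMsub: "carr (FF M) \<subseteq> carr M" unfolding F_simps using mod_act[OF M] by blast
  have surj0: "\<forall>f\<in>carr (GG (FF M)). (\<forall>x\<in>ES. f x \<in> Mc j) \<longrightarrow> (\<exists>m\<in>Mc j. \<forall>x\<in>ES. act M x m = f x)"
    if "j \<le> t" for j
    using that
  proof (induction j)
    case 0
    show ?case
    proof (intro ballI impI)
      fix f assume "\<forall>x\<in>ES. f x \<in> Mc 0"
      hence "\<forall>x\<in>ES. act M x 0 = f x" using M0 act_zero[OF M] by simp
      thus "\<exists>m\<in>Mc 0. \<forall>x\<in>ES. act M x m = f x" using M0 by blast
    qed
  next
    case (Suc j)
    hence j: "j < t" by simp
    obtain \<psi> where P: "(\<forall>m\<in>Mc (Suc j). \<psi> m \<in> carr (GG (D (\<mu> j)))) \<and>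
       (\<forall>m\<in>Mc (Suc j). \<forall>n\<in>Mc (Suc j). \<psi> (m + n) = \<psi> m + \<psi> n \<and> \<psi> (m - n) = \<psi> m - \<psi> n) \<and>
       (\<forall>c. \<forall>m\<in>Mc (Suc j). \<psi> (smul M c m) = smul (GG (D (\<mu> j))) c (\<psi> m)) \<and>
       (\<forall>s. \<forall>m\<in>Mc (Suc j). \<psi> (act M s m) = act (GG (D (\<mu> j))) s (\<psi> m)) \<and>
       \<psi> ` Mc (Suc j) = carr (GG (D (\<mu> j))) \<and> {x \<in> Mc (Suc j). \<psi> x = 0} = Mc j \<and> \<psi> 0 = 0 \<and>
       is_mod sH (D (\<mu> j))"
      using step[OF j] by (elim exE) (rule that, assumption)
    define Dm where "Dm = D (\<mu> j)"
    have DM: "is_mod sH Dm" using P unfolding Dm_def by blast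
    have pG: "m \<in> Mc (Suc j) \<Longrightarrow> \<psi> m \<in> carr (GG Dm)" for m using P unfolding Dm_def by blast
    have padd: "m \<in> Mc (Suc j) \<Longrightarrow> n \<in> Mc (Suc j) \<Longrightarrow> \<psi> (m + n) = \<psi> m + \<psi> n" for m n using P by blast
    have pdiff: "m \<in> Mc (Suc j) \<Longrightarrow> n \<in> Mc (Suc j) \<Longrightarrow> \<psi> (m - n) = \<psi> m - \<psi> n" for m n using P by blast
    have psmul: "m \<in> Mc (Suc j) \<Longrightarrow> \<psi> (smul M c m) = smul (GG Dm) c (\<psi> m)" for m c using P unfolding Dm_def by blast
    have pact: "m \<in> Mc (Suc j) \<Longrightarrow> \<psi> (act M s m) = act (GG Dm) s (\<psi> m)" for m s using P unfolding Dm_def by blast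
    have pim: "\<psi> ` Mc (Suc j) = carr (GG Dm)" using P unfolding Dm_def by blast
    have pker: "{x \<in> Mc (Suc j). \<psi> x = 0} = Mc j" using P by blast
    have S: "sub_mod M (Mc (Suc j))" using Ms j by simp
    have SS: "Mc j \<subseteq> Mc (Suc j)" using Mi j by blast
    show ?case
    proof (intro ballI impI)
      fix f assume f: "f \<in> carr (GG (FF M))" and fM: "\<forall>x\<in>ES. f x \<in> Mc (Suc j)"
      define u where "u = (\<lambda>x. if x \<in> ES then \<psi> (f x) e else 0)"
      have uG: "u \<in> carr (GG Dm)"
      proof (rule Gcarr_I)
        fix x assume x: "x \<in> ES"
        show "u x \<in> carr Dm" unfolding u_def using x Gcarr_D(1)[OF pG ES_closed(7)] fM by simp
        show "u (sS c x) = smul Dm c (u x)" for c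
        proof -
          have "u (sS c x) = \<psi> (smul M c (f x)) e" unfolding u_def using ES_closed(4)[OF x] Gcarr_D(3)[OF f x]
            by (simp add: F_simps)
          also have "\<dots> = smul (GG Dm) c (\<psi> (f x)) e" using psmul fM x by simp
          also have "\<dots> = smul Dm c (u x)" unfolding G_smul u_def using x ES_closed(7) by simp
          finally show ?thesis .
        qed
        show "u (\<phi> a * x) = act Dm a (u x)" for a
        proof -
          have "u (\<phi> a * x) = \<psi> (act M (\<phi> a) (f x)) e" unfolding u_def using ES_closed(5)[OF x] Gcarr_D(4)[OF f x]
            by (simp add: F_simps)
          also have "\<dots> = act (GG Dm) (\<phi> a) (\<psi> (f x)) e" using pact fM x by simp
          also have "\<dots> = \<psi> (f x) (\<phi> a * e)" unfolding G_act using ES_closed(7) by (simp add: phi_e)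
          also have "\<dots> = act Dm a (u x)" unfolding u_def using x Gcarr_D(4)[OF pG ES_closed(7)] fM by simp
          finally show ?thesis .
        qed
        show "u (x + y) = u x + u y" if y: "y \<in> ES" for y
          unfolding u_def using x y ES_closed(2)[OF x y] Gcarr_D(2)[OF f x y] padd fM by simp
      qed (simp add: u_def)
      obtain m1 where um1: "u = \<psi> m1" and m1: "m1 \<in> Mc (Suc j)" using uG pim by (metis imageE)
      have m1M: "m1 \<in> carr M" using McM[OF _ m1] j by simp
      define f' where "f' = f + - eta M m1"
      have f'G: "f' \<in> carr (GG (FF M))" unfolding f'_def
        by (rule G_add[OF FM f G_neg_closed[OF FM eta_carr[OF M m1M]]])
      have f'x: "f' x = f x - act M x m1" if "x \<in> ES" for x unfolding f'_def eta_def using that by simp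
      have f'j: "\<forall>x\<in>ES. f' x \<in> Mc j"
      proof
        fix x assume x: "x \<in> ES"
        have in1: "f' x \<in> Mc (Suc j)" unfolding f'x[OF x]
          by (rule sub_mod_diff[OF M S]) (use fM x sub_modD(5)[OF S m1] in auto)
        have "\<psi> (f' x) e = \<psi> (f x) e - \<psi> (act M x m1) e"
          unfolding f'x[OF x] using pdiff fM x sub_modD(5)[OF S m1] by simp
        also have "\<dots> = \<psi> (f x) e - u (e * x)" unfolding pact[OF m1] um1[symmetric] G_act using ES_closed(7) by simp
        also have "\<dots> = 0" using x ES_iff unfolding u_def by simp
        finally have w0: "\<psi> (f' x) e = 0" .
        have "f' x = act M e (f' x)" using ee Gcarr_D(1)[OF f'G x] by simp
        hence "\<psi> (f' x) = act (GG Dm) e (\<psi> (f' x))" using pact[OF in1] by metis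
        also have "\<dots> = 0" by (rule G_e_kill[OF DM pG[OF in1] w0])
        finally show "f' x \<in> Mc j" using pker in1 by blast
      qed
      obtain m0 where m0: "m0 \<in> Mc j" and am0: "\<forall>x\<in>ES. act M x m0 = f' x"
        using Suc.IH[OF less_imp_le[OF j]] f'G f'j by blast
      have m0M: "m0 \<in> carr M" using McM[OF _ m0] j by simp
      show "\<exists>m\<in>Mc (Suc j). \<forall>x\<in>ES. act M x m = f x"
      proof (intro bexI ballI)
        show "m0 + m1 \<in> Mc (Suc j)" using sub_modD(3)[OF S] m0 m1 SS by blast
        fix x assume x: "x \<in> ES"
        show "act M x (m0 + m1) = f x" using act_add[OF M m0M m1M] am0 f'x[OF x] x by simp
      qed
    qed
  qed
  have surj: "eta M ` carr M = carr (GG (FF M))"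
  proof
    show "eta M ` carr M \<subseteq> carr (GG (FF M))" using eta_carr[OF M] by blast
    show "carr (GG (FF M)) \<subseteq> eta M ` carr M"
    proof
      fix f assume f: "f \<in> carr (GG (FF M))"
      have "\<forall>x\<in>ES. f x \<in> Mc t" using Mt Gcarr_D(1)[OF f] FMsub by blast
      then obtain m where m: "m \<in> Mc t" and am: "\<forall>x\<in>ES. act M x m = f x" using surj0[of t] f by blast
      have "eta M m = f"
      proof
        fix x show "eta M m x = f x" unfolding eta_def using am Gcarr_D(5)[OF f] by auto
      qed
      thus "f \<in> eta M ` carr M" using m Mt by blast
    qed
  qed
  have bij: "bij_betw (eta M) (carr M) (carr (GG (FF M)))" using inj surj unfolding bij_betw_def by blast
  define \<theta> where "\<theta> = the_inv_into (carr M) (eta M)"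
  have bij2: "bij_betw \<theta> (carr (GG (FF M))) (carr M)" unfolding \<theta>_def by (rule bij_betw_the_inv_into[OF bij])
  have th1: "f \<in> carr (GG (FF M)) \<Longrightarrow> \<theta> f \<in> carr M \<and> eta M (\<theta> f) = f" for f
    unfolding \<theta>_def using bij2 f_the_inv_into_f[OF inj] surj \<theta>_def bij_betwE by fastforce
  have th2: "m \<in> carr M \<Longrightarrow> \<theta> (eta M m) = m" for m unfolding \<theta>_def by (rule the_inv_into_f_f[OF inj])
  have hom: "mod_hom (GG (FF M)) M \<theta>"
    unfolding mod_hom_def
  proof (intro conjI ballI allI)
    fix f assume f: "f \<in> carr (GG (FF M))"
    note tf = th1[OF f]
    show "\<theta> f \<in> carr M" using tf by blast
    show "\<theta> (smul (GG (FF M)) c f) = smul M c (\<theta> f)" for c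
      using eta_smul[OF M, of "\<theta> f" c] tf th2[OF mod_smul[OF M, of "\<theta> f" c]] by simp
    show "\<theta> (act (GG (FF M)) s f) = act M s (\<theta> f)" for s
      using eta_act[OF M, of "\<theta> f" s] tf th2[OF mod_act[OF M, of "\<theta> f" s]] by simp
    fix g assume g: "g \<in> carr (GG (FF M))"
    note tg = th1[OF g]
    show "\<theta> (f + g) = \<theta> f + \<theta> g"
      using eta_add[OF M, of "\<theta> f" "\<theta> g"] tf tg th2[OF mod_add[OF M, of "\<theta> f" "\<theta> g"]] by simp
  qed
  show ?thesis unfolding mod_iso_def using hom bij2 by blast
qed

end


context schur begin

definition mkE :: "('k, 'h, 'd::ab_group_add) modl \<Rightarrow> ('h \<Rightarrow> 's \<Rightarrow> 'd) \<Rightarrow> ('k, 'h, 'd \<times> 's) modl" where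
  "mkE Dm C = \<lparr>carr = carr Dm \<times> ES, smul = (\<lambda>c p. (smul Dm c (fst p), sS c (snd p))),
      act = (\<lambda>h p. (act Dm h (fst p) + C h (snd p), \<phi> h * snd p))\<rparr>"

lemma EB_nz: "0 \<notin> EB" using EB(3) VS.dependent_zero by blast

lemma fin_dim_prod:
  fixes Dm :: "('k, 'h, 'd::ab_group_add) modl"
  assumes Dm: "is_mod sH Dm"
  shows "fin_dim_on (smul (mkE Dm C)) (carr Dm \<times> ES)"
proof -
  obtain BD where BD: "finite BD" "BD \<subseteq> carr Dm" "\<forall>v\<in>carr Dm. \<exists>c. v = (\<Sum>b\<in>BD. smul Dm (c b) b)"
    using mod_fd[OF Dm] unfolding fin_dim_on_def by blast
  define B1 where "B1 = (\<lambda>d. (d, 0::'s)) ` BD"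
  define B2 where "B2 = (\<lambda>b. (0::'d, b)) ` EB"
  have disj: "B1 \<inter> B2 = {}" unfolding B1_def B2_def using EB_nz by auto
  have fin: "finite B1" "finite B2" unfolding B1_def B2_def using BD EB(1) by auto
  show ?thesis unfolding fin_dim_on_def
  proof (rule exI[of _ "B1 \<union> B2"], intro conjI ballI)
    show "finite (B1 \<union> B2)" using fin by simp
    show "B1 \<union> B2 \<subseteq> carr Dm \<times> ES" unfolding B1_def B2_def using BD(2) EB(2) mod_zero[OF Dm] ES_closed(1) by auto
    fix p assume p: "p \<in> carr Dm \<times> ES"
    obtain d y where pdy: "p = (d, y)" and d: "d \<in> carr Dm" and y: "y \<in> ES" using p by auto
    obtain c1 where c1: "d = (\<Sum>b\<in>BD. smul Dm (c1 b) b)" using BD(3) d by blast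
    define c where "c = (\<lambda>q. if q \<in> B1 then c1 (fst q) else rep y (snd q))"
    have s1: "(\<Sum>q\<in>B1. smul (mkE Dm C) (c q) q) = (d, 0)"
    proof -
      have "(\<Sum>q\<in>B1. smul (mkE Dm C) (c q) q) = (\<Sum>b\<in>BD. smul (mkE Dm C) (c (b, 0)) (b, 0))"
        unfolding B1_def by (rule sum.reindex[unfolded comp_def]) (auto simp: inj_on_def)
      also have "\<dots> = (\<Sum>b\<in>BD. (smul Dm (c1 b) b, 0))"
        by (intro sum.cong refl) (auto simp: mkE_def c_def B1_def)
      also have "\<dots> = (d, 0)" unfolding sum_prod c1 by simp
      finally show ?thesis .
    qed
    have s2: "(\<Sum>q\<in>B2. smul (mkE Dm C) (c q) q) = (0, y)"
    proof -
      have "(\<Sum>q\<in>B2. smul (mkE Dm C) (c q) q) = (\<Sum>b\<in>EB. smul (mkE Dm C) (c (0, b)) (0, b))"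
        unfolding B2_def by (rule sum.reindex[unfolded comp_def]) (auto simp: inj_on_def)
      also have "\<dots> = (\<Sum>b\<in>EB. (0, sS (rep y b) b))"
      proof (intro sum.cong refl)
        fix b assume b: "b \<in> EB"
        have "(0, b) \<notin> B1" using disj b unfolding B2_def by blast
        thus "smul (mkE Dm C) (c (0, b)) (0, b) = (0, sS (rep y b) b)"
          unfolding mkE_def c_def by (simp add: smul_zero[OF Dm])
      qed
      also have "\<dots> = (0, y)" unfolding sum_prod using ES_expand[OF y] by simp
      finally show ?thesis .
    qed
    have "p = (\<Sum>q\<in>B1. smul (mkE Dm C) (c q) q) + (\<Sum>q\<in>B2. smul (mkE Dm C) (c q) q)"
      unfolding s1 s2 pdy by simp
    also have "\<dots> = (\<Sum>q\<in>B1 \<union> B2. smul (mkE Dm C) (c q) q)"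
      by (rule sum.union_disjoint[symmetric]) (use fin disj in auto)
    finally show "\<exists>c. p = (\<Sum>b\<in>B1 \<union> B2. smul (mkE Dm C) (c b) b)" by blast
  qed
qed

lemma mkE_simps: "carr (mkE Dm C) = carr Dm \<times> ES" "smul (mkE Dm C) c (d, y) = (smul Dm c d, sS c y)"
  "act (mkE Dm C) h (d, y) = (act Dm h d + C h y, \<phi> h * y)"
  unfolding mkE_def by simp_all

lemma mkE_mod:
  fixes Dm :: "('k, 'h, 'd::ab_group_add) modl"
  assumes Dm: "is_mod sH Dm"
    and C1: "\<And>h y. y \<in> ES \<Longrightarrow> C h y \<in> carr Dm"
    and C2: "\<And>h y1 y2. y1 \<in> ES \<Longrightarrow> y2 \<in> ES \<Longrightarrow> C h (y1 + y2) = C h y1 + C h y2"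
    and C3: "\<And>a b y. y \<in> ES \<Longrightarrow> C (a + b) y = C a y + C b y"
    and C4: "\<And>a b y. y \<in> ES \<Longrightarrow> C (a * b) y = act Dm a (C b y) + C a (\<phi> b * y)"
    and C5: "\<And>y. y \<in> ES \<Longrightarrow> C 1 y = 0"
    and C6: "\<And>c a y. y \<in> ES \<Longrightarrow> C (sH c a) y = smul Dm c (C a y)"
    and C7: "\<And>c a y. y \<in> ES \<Longrightarrow> C a (sS c y) = smul Dm c (C a y)"
  shows "is_mod sH (mkE Dm C)"
  unfolding is_mod_def
proof (intro conjI ballI allI)
  show "fin_dim_on (smul (mkE Dm C)) (carr (mkE Dm C))" unfolding mkE_simps(1) by (rule fin_dim_prod[OF Dm])
  show "0 \<in> carr (mkE Dm C)" unfolding mkE_simps zero_prod_def using mod_zero[OF Dm] ES_closed(1) by simp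
  fix p assume "p \<in> carr (mkE Dm C)"
  then obtain d y where p: "p = (d, y)" and d: "d \<in> carr Dm" and y: "y \<in> ES" unfolding mkE_simps by auto
  show "- p \<in> carr (mkE Dm C)" unfolding p mkE_simps using mod_neg[OF Dm d] ES_closed(3)[OF y] by simp
  show "smul (mkE Dm C) c p \<in> carr (mkE Dm C)" for c
    unfolding p mkE_simps using mod_smul[OF Dm d] ES_closed(4)[OF y] by simp
  show "act (mkE Dm C) a p \<in> carr (mkE Dm C)" for a
    unfolding p mkE_simps using mod_act[OF Dm d] C1[OF y] mod_add[OF Dm] ES_closed(5)[OF y] by simp
  show "smul (mkE Dm C) (c + c') p = smul (mkE Dm C) c p + smul (mkE Dm C) c' p" for c c'
    unfolding p mkE_simps using smul_adds[OF Dm d] kS_D(2) by simp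
  show "smul (mkE Dm C) (c * c') p = smul (mkE Dm C) c (smul (mkE Dm C) c' p)" for c c'
    unfolding p mkE_simps using smul_mult[OF Dm d] kS_D(3) by simp
  show "smul (mkE Dm C) 1 p = p" unfolding p mkE_simps using smul_one[OF Dm d] kS_D(4) by simp
  show "act (mkE Dm C) (a + b) p = act (mkE Dm C) a p + act (mkE Dm C) b p" for a b
    unfolding p mkE_simps using act_adds[OF Dm d] C3[OF y] by (simp add: phi_add distrib_right algebra_simps)
  show "act (mkE Dm C) (a * b) p = act (mkE Dm C) a (act (mkE Dm C) b p)" for a b
    unfolding p mkE_simps using act_mult[OF Dm d] C4[OF y] act_add[OF Dm mod_act[OF Dm d] C1[OF y]]
    by (simp add: phi_mult mult.assoc algebra_simps)
  show "act (mkE Dm C) 1 p = p" unfolding p mkE_simps using act_one[OF Dm d] C5[OF y] y ES_iff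
    by (simp add: phi_one)
  show "act (mkE Dm C) (sH c a) p = smul (mkE Dm C) c (act (mkE Dm C) a p)" for c a
    unfolding p mkE_simps using act_sa[OF Dm d] C6[OF y] smul_add[OF Dm mod_act[OF Dm d] C1[OF y]]
    by (simp add: phi_smul kS_D(5))
  show "act (mkE Dm C) a (smul (mkE Dm C) c p) = smul (mkE Dm C) c (act (mkE Dm C) a p)" for c a
    unfolding p mkE_simps using act_smul[OF Dm d] C7[OF y] smul_add[OF Dm mod_act[OF Dm d] C1[OF y]]
    by (simp add: kS_D(6))
  fix q assume "q \<in> carr (mkE Dm C)"
  then obtain d' y' where q: "q = (d', y')" and d': "d' \<in> carr Dm" and y': "y' \<in> ES" unfolding mkE_simps by auto
  show "p + q \<in> carr (mkE Dm C)" unfolding p q mkE_simps using mod_add[OF Dm d d'] ES_closed(2)[OF y y'] by simp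
  show "smul (mkE Dm C) c (p + q) = smul (mkE Dm C) c p + smul (mkE Dm C) c q" for c
    unfolding p q mkE_simps using smul_add[OF Dm d d'] kS_D(1) by (simp add: mkE_simps)
  show "act (mkE Dm C) a (p + q) = act (mkE Dm C) a p + act (mkE Dm C) a q" for a
    unfolding p q mkE_simps using act_add[OF Dm d d'] C2[OF y y'] by (simp add: mkE_simps distrib_left algebra_simps)
qed

end


context schur begin

abbreviation "XX \<equiv> eS_mod sS e \<phi>"

lemma X_simps: "carr XX = ES" "smul XX = sS" "act XX h x = \<phi> h * x"
  unfolding eS_mod_def ES_def by simp_all

lemma split_ext:
  fixes Dm :: "('k, 'h, 'd::ab_group_add) modl"
  assumes Dm: "is_mod sH Dm" and noext: "\<not> ext1_nonzero sH XX Dm"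
    and E: "is_mod sH (mkE Dm C)"
    and C0: "\<And>h. C h 0 = 0"
  shows "\<exists>\<sigma>. (\<forall>x\<in>ES. \<sigma> x \<in> carr Dm) \<and> (\<forall>x\<in>ES. \<forall>y\<in>ES. \<sigma> (x + y) = \<sigma> x + \<sigma> y) \<and>
     (\<forall>c. \<forall>x\<in>ES. \<sigma> (sS c x) = smul Dm c (\<sigma> x)) \<and>
     (\<forall>h. \<forall>x\<in>ES. \<sigma> (\<phi> h * x) = act Dm h (\<sigma> x) + C h x)"
proof -
  have h1: "mod_hom Dm (mkE Dm C) (\<lambda>y. (y, 0))"
    unfolding mod_hom_def mkE_simps using ES_closed(1) by (simp add: C0 mkE_simps)
  have h2: "mod_hom (mkE Dm C) XX snd"
    unfolding mod_hom_def mkE_simps X_simps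
  proof (intro conjI ballI allI)
    fix p assume "p \<in> carr Dm \<times> ES"
    then obtain d y where p: "p = (d, y)" by auto
    show "snd (smul (mkE Dm C) c p) = sS c (snd p)" for c unfolding p by (simp add: mkE_simps)
    show "snd (act (mkE Dm C) a p) = \<phi> a * snd p" for a unfolding p by (simp add: mkE_simps)
  qed auto
  have sm: "\<forall>c y x. smul (mkE Dm C) c (y, x) = (smul Dm c y, smul XX c x)" by (simp add: mkE_simps X_simps)
  have cE: "carr (mkE Dm C) = carr Dm \<times> carr XX" by (simp add: mkE_simps X_simps)
  obtain s where s: "mod_hom XX (mkE Dm C) s" "\<forall>x\<in>carr XX. snd (s x) = x"
    using noext E h1 h2 sm cE unfolding ext1_nonzero_def by blast
  note sD = s(1)[unfolded mod_hom_def X_simps]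
  have s2: "x \<in> ES \<Longrightarrow> s x = (fst (s x), x)" for x using s(2) unfolding X_simps by (metis prod.collapse)
  show ?thesis
  proof (rule exI[of _ "\<lambda>x. fst (s x)"], intro conjI ballI allI)
    fix x assume x: "x \<in> ES"
    show "fst (s x) \<in> carr Dm" using sD x unfolding mkE_simps by (metis mem_Times_iff)
    show "fst (s (sS c x)) = smul Dm c (fst (s x))" for c
      using sD x s2[OF x] by (metis fst_conv mkE_simps(2))
    show "fst (s (\<phi> h * x)) = act Dm h (fst (s x)) + C h x" for h
      using sD x s2[OF x] by (metis fst_conv mkE_simps(3))
    fix y assume y: "y \<in> ES"
    show "fst (s (x + y)) = fst (s x) + fst (s y)" using sD x y by simp
  qed
qed

end


context schur begin

lemma sstep:
  fixes N :: "('k, 'h, 'n::ab_group_add) modl" and Dm :: "('k, 'h, 'd::ab_group_add) modl"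
  assumes N: "is_mod sH N" and Dm: "is_mod sH Dm" and noext: "\<not> ext1_nonzero sH XX Dm"
    and A: "sub_mod N A" and A': "sub_mod N A'" and B: "sub_mod N B" and AA': "A \<subseteq> A'" and A'B: "A' \<subseteq> B"
    and rho: "mod_hom (N\<lparr>carr := A'\<rparr>) Dm \<rho>" and surj: "\<rho> ` A' = carr Dm" and ker: "{x \<in> A'. \<rho> x = 0} = A"
    and g: "klin sS ES N B g" and hg: "hact N A' g"
  shows "\<exists>g1. klin sS ES N B g1 \<and> hact N A g1 \<and> (\<forall>x\<in>ES. g1 x - g x \<in> A')"
proof -
  have BN: "B \<subseteq> carr N" and A'N: "A' \<subseteq> carr N" using sub_modD(1)[OF B] sub_modD(1)[OF A'] by auto
  have gB: "x \<in> ES \<Longrightarrow> g x \<in> B" for x using g unfolding klin_def by blast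
  have gN: "x \<in> ES \<Longrightarrow> g x \<in> carr N" for x using gB BN by blast
  have gadd: "x \<in> ES \<Longrightarrow> y \<in> ES \<Longrightarrow> g (x + y) = g x + g y" for x y using g unfolding klin_def by blast
  have gsm: "x \<in> ES \<Longrightarrow> g (sS c x) = smul N c (g x)" for x c using g unfolding klin_def by blast
  note rD = rho[unfolded mod_hom_restr]
  have radd: "x \<in> A' \<Longrightarrow> y \<in> A' \<Longrightarrow> \<rho> (x + y) = \<rho> x + \<rho> y" for x y using rD by blast
  have rsm: "x \<in> A' \<Longrightarrow> \<rho> (smul N c x) = smul Dm c (\<rho> x)" for x c using rD by blast
  have ract: "x \<in> A' \<Longrightarrow> \<rho> (act N a x) = act Dm a (\<rho> x)" for x a using rD by blast
  have rD': "x \<in> A' \<Longrightarrow> \<rho> x \<in> carr Dm" for x using rD by blast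
  have r0: "\<rho> 0 = 0" using hom_zero[of A' \<rho>] rD sub_modD(2)[OF A'] by blast
  define cc where "cc = (\<lambda>h x. g (\<phi> h * x) - act N h (g x))"
  have ccA: "x \<in> ES \<Longrightarrow> cc h x \<in> A'" for h x using hg unfolding hact_def cc_def by blast
  have ccN: "x \<in> ES \<Longrightarrow> cc h x \<in> carr N" for h x using ccA A'N by blast
  have c2: "cc h (y1 + y2) = cc h y1 + cc h y2" if "y1 \<in> ES" "y2 \<in> ES" for h y1 y2
    unfolding cc_def using that ES_closed(2,5)
    by (simp add: distrib_left gadd act_add[OF N gN gN] algebra_simps)
  have c3: "cc (a + b) y = cc a y + cc b y" if "y \<in> ES" for a b y
    unfolding cc_def using that ES_closed(5)
    by (simp add: phi_add distrib_right gadd act_adds[OF N gN] algebra_simps)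
  have c4: "cc (a * b) y = act N a (cc b y) + cc a (\<phi> b * y)" if y: "y \<in> ES" for a b y
  proof -
    have "act N a (cc b y) = act N a (g (\<phi> b * y)) - act N a (act N b (g y))"
      unfolding cc_def by (rule act_diff[OF N gN[OF ES_closed(5)[OF y]] mod_act[OF N gN[OF y]]])
    thus ?thesis unfolding cc_def using act_mult[OF N gN[OF y]] by (simp add: phi_mult mult.assoc)
  qed
  have c5: "cc 1 y = 0" if "y \<in> ES" for y
    unfolding cc_def using that ES_iff act_one[OF N gN[OF that]] by (simp add: phi_one)
  have c6: "cc (sH c a) y = smul N c (cc a y)" if y: "y \<in> ES" for c a y
    unfolding cc_def using y ES_closed(5)[OF y]
    by (simp add: phi_smul kS_D(5)[symmetric] gsm act_sa[OF N gN] smul_diff[OF N gN mod_act[OF N gN]])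
  have c7: "cc a (sS c y) = smul N c (cc a y)" if y: "y \<in> ES" for c a y
    unfolding cc_def using y ES_closed(5)[OF y] ES_closed(4)[OF y]
    by (simp add: kS_D(6)[symmetric] gsm act_smul[OF N gN] smul_diff[OF N gN mod_act[OF N gN]])
  define C where "C = (\<lambda>h x. \<rho> (cc h x))"
  have E: "is_mod sH (mkE Dm C)"
  proof (rule mkE_mod[OF Dm])
    fix h a b c y y1 y2
    assume y: "y \<in> ES"
    show "C h y \<in> carr Dm" unfolding C_def by (rule rD'[OF ccA[OF y]])
    show "C (a + b) y = C a y + C b y" unfolding C_def c3[OF y] by (rule radd[OF ccA[OF y] ccA[OF y]])
    show "C (a * b) y = act Dm a (C b y) + C a (\<phi> b * y)" unfolding C_def c4[OF y]
      using radd[OF sub_modD(5)[OF A' ccA[OF y]] ccA[OF ES_closed(5)[OF y]]] ract[OF ccA[OF y]] by simp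
    show "C 1 y = 0" unfolding C_def c5[OF y] by (rule r0)
    show "C (sH c a) y = smul Dm c (C a y)" unfolding C_def c6[OF y] by (rule rsm[OF ccA[OF y]])
    show "C a (sS c y) = smul Dm c (C a y)" unfolding C_def c7[OF y] by (rule rsm[OF ccA[OF y]])
  next
    fix h y1 y2 assume y1: "y1 \<in> ES" and y2: "y2 \<in> ES"
    show "C h (y1 + y2) = C h y1 + C h y2" unfolding C_def c2[OF y1 y2] by (rule radd[OF ccA[OF y1] ccA[OF y2]])
  qed
  have g0: "g 0 = 0" by (rule klin_zero[OF g])
  have C0: "C h 0 = 0" for h unfolding C_def cc_def using g0 act_zero[OF N] r0 by simp
  obtain \<sigma> where sig: "(\<forall>x\<in>ES. \<sigma> x \<in> carr Dm) \<and> (\<forall>x\<in>ES. \<forall>y\<in>ES. \<sigma> (x + y) = \<sigma> x + \<sigma> y) \<and>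
     (\<forall>c. \<forall>x\<in>ES. \<sigma> (sS c x) = smul Dm c (\<sigma> x)) \<and>
     (\<forall>h. \<forall>x\<in>ES. \<sigma> (\<phi> h * x) = act Dm h (\<sigma> x) + C h x)"
    using split_ext[OF Dm noext E C0] by (elim exE) (rule that, assumption)
  have sigK: "klin sS ES Dm (carr Dm) \<sigma>" unfolding klin_def using sig by blast
  have sigD: "x \<in> ES \<Longrightarrow> \<sigma> x \<in> carr Dm" for x using sig by blast
  have sigact: "x \<in> ES \<Longrightarrow> \<sigma> (\<phi> h * x) = act Dm h (\<sigma> x) + C h x" for x h using sig by blast
  define av where "av = (\<lambda>b. SOME a. a \<in> A' \<and> \<rho> a = \<sigma> b)"
  have av: "b \<in> EB \<Longrightarrow> av b \<in> A' \<and> \<rho> (av b) = \<sigma> b" for b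
  proof -
    assume b: "b \<in> EB"
    have "\<sigma> b \<in> \<rho> ` A'" unfolding surj using sigD EB(2) b by blast
    hence "\<exists>a. a \<in> A' \<and> \<rho> a = \<sigma> b" by (elim imageE) auto
    thus ?thesis unfolding av_def by (rule someI_ex)
  qed
  define w where "w = (\<lambda>b. g b - av b)"
  have wB: "b \<in> EB \<Longrightarrow> w b \<in> B" for b
    unfolding w_def using sub_mod_diff[OF N B gB] av A'B EB(2) by blast
  define g1 where "g1 = lext N w"
  have g1K: "klin sS ES N B g1" unfolding g1_def by (rule lext_klin[OF N B wB])
  have g1N: "x \<in> ES \<Longrightarrow> g1 x \<in> carr N" for x using g1K BN unfolding klin_def by blast
  have g1b: "b \<in> EB \<Longrightarrow> g1 b = w b" for b unfolding g1_def by (rule lext_basis[OF N]) (use wB BN in auto)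
  define k where "k = (\<lambda>x. g x - g1 x)"
  have kK: "klin sS ES N (carr N) k" unfolding klin_def k_def
  proof (intro conjI ballI allI)
    fix x assume x: "x \<in> ES"
    show "g x - g1 x \<in> carr N" using mod_diff[OF N gN[OF x] g1N[OF x]] .
    show "g (sS c x) - g1 (sS c x) = smul N c (g x - g1 x)" for c
      using gsm[OF x] g1K x smul_diff[OF N gN[OF x] g1N[OF x]] unfolding klin_def by simp
    fix y assume y: "y \<in> ES"
    show "g (x + y) - g1 (x + y) = g x - g1 x + (g y - g1 y)"
      using gadd[OF x y] g1K x y unfolding klin_def by (simp add: algebra_simps)
  qed
  have kb: "b \<in> EB \<Longrightarrow> k b = av b" for b unfolding k_def g1b w_def by simp
  have kA: "x \<in> ES \<Longrightarrow> k x \<in> A'" for x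
  proof -
    assume x: "x \<in> ES"
    have "k x = (\<Sum>b\<in>EB. smul N (rep x b) (k b))" by (rule klin_expand[OF kK x])
    also have "\<dots> \<in> A'" by (rule sub_mod_sum[OF A']) (use sub_modD(4)[OF A'] kb av in auto)
    finally show ?thesis .
  qed
  have rkK: "klin sS ES Dm (carr Dm) (\<lambda>x. \<rho> (k x))" unfolding klin_def
  proof (intro conjI ballI allI)
    fix x assume x: "x \<in> ES"
    show "\<rho> (k x) \<in> carr Dm" using rD' kA x by blast
    show "\<rho> (k (sS c x)) = smul Dm c (\<rho> (k x))" for c using kK x rsm[OF kA[OF x]] unfolding klin_def by simp
    fix y assume y: "y \<in> ES"
    show "\<rho> (k (x + y)) = \<rho> (k x) + \<rho> (k y)" using kK x y radd[OF kA[OF x] kA[OF y]] unfolding klin_def by simp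
  qed
  have rk: "x \<in> ES \<Longrightarrow> \<rho> (k x) = \<sigma> x" for x
    by (rule klin_unique[OF rkK sigK]) (use kb av in simp_all)
  show ?thesis
  proof (rule exI[of _ g1], intro conjI ballI g1K)
    fix x assume x: "x \<in> ES"
    have "g1 x - g x = - k x" unfolding k_def by simp
    thus "g1 x - g x \<in> A'" using sub_mod_neg[OF N A' kA[OF x]] by simp
  next
    show "hact N A g1" unfolding hact_def
    proof (intro allI ballI)
      fix h x assume x: "x \<in> ES"
      have hx: "\<phi> h * x \<in> ES" using ES_closed(5)[OF x] .
      have kN: "z \<in> ES \<Longrightarrow> k z \<in> carr N" for z using kA A'N by blast
      have g1e: "z \<in> ES \<Longrightarrow> g1 z = g z - k z" for z unfolding k_def by simp
      define d where "d = g1 (\<phi> h * x) - act N h (g1 x)"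
      have d: "d = (cc h x + act N h (k x)) - k (\<phi> h * x)"
        unfolding d_def cc_def g1e[OF x] g1e[OF hx] act_diff[OF N gN[OF x] kN[OF x]] by (simp add: algebra_simps)
      have in1: "cc h x + act N h (k x) \<in> A'" using sub_modD(3,5)[OF A'] ccA[OF x] kA[OF x] by blast
      have dA': "d \<in> A'" unfolding d using sub_mod_diff[OF N A' in1 kA[OF hx]] .
      have "\<rho> d = \<rho> (cc h x + act N h (k x)) - \<rho> (k (\<phi> h * x))"
        unfolding d by (rule hom_diff[OF _ in1 kA[OF hx] dA'[unfolded d]]) (use radd in blast)
      also have "\<dots> = C h x + act Dm h (\<sigma> x) - \<sigma> (\<phi> h * x)"
        unfolding radd[OF ccA[OF x] sub_modD(5)[OF A' kA[OF x]]] ract[OF kA[OF x]] rk[OF x] rk[OF hx] C_def ..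
      also have "\<dots> = 0" unfolding sigact[OF x] by simp
      finally have "\<rho> d = 0" .
      thus "g1 (\<phi> h * x) - act N h (g1 x) \<in> A" using dA' ker unfolding d_def by blast
    qed
  qed
qed

end


context schur begin

lemma lift:
  fixes N :: "('k, 'h, 'n::ab_group_add) modl" and D :: "'l \<Rightarrow> ('k, 'h, 'd::ab_group_add) modl"
  assumes N: "is_mod sH N" and D: "\<forall>\<mu>\<in>Lam. is_mod sH (D \<mu>)" and noext: "\<forall>\<mu>\<in>Lam. \<not> ext1_nonzero sH XX (D \<mu>)"
    and N0: "Nc 0 = {0}" and Ns: "\<forall>i\<le>t. sub_mod N (Nc i)"
    and Ni: "\<forall>i<t. Nc i \<subseteq> Nc (Suc i) \<and> \<mu> i \<in> Lam \<and>
           (\<exists>f. mod_hom (N\<lparr>carr := Nc (Suc i)\<rparr>) (D (\<mu> i)) f \<and>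
                f ` Nc (Suc i) = carr (D (\<mu> i)) \<and> {x \<in> Nc (Suc i). f x = 0} = Nc i)"
    and j: "j \<le> t"
  shows "\<forall>B g. sub_mod N B \<longrightarrow> Nc j \<subseteq> B \<longrightarrow> klin sS ES N B g \<longrightarrow> hact N (Nc j) g \<longrightarrow>
     (\<exists>f. klin sS ES N B f \<and> hact N {0} f \<and> (\<forall>x\<in>ES. f x - g x \<in> Nc j))"
  using j
proof (induction j)
  case 0
  show ?case unfolding N0
  proof (intro allI impI)
    fix B g assume "sub_mod N B" "{0} \<subseteq> B" "klin sS ES N B g" "hact N {0} g"
    thus "\<exists>f. klin sS ES N B f \<and> hact N {0} f \<and> (\<forall>x\<in>ES. f x - g x \<in> {0})"
      by (intro exI[of _ g]) simp
  qed
next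
  case (Suc j)
  hence jt: "j < t" by simp
  show ?case
  proof (intro allI impI)
    fix B g assume B: "sub_mod N B" and NB: "Nc (Suc j) \<subseteq> B" and g: "klin sS ES N B g"
      and hg: "hact N (Nc (Suc j)) g"
    obtain \<rho> where rho: "mod_hom (N\<lparr>carr := Nc (Suc j)\<rparr>) (D (\<mu> j)) \<rho>"
       "\<rho> ` Nc (Suc j) = carr (D (\<mu> j))" "{x \<in> Nc (Suc j). \<rho> x = 0} = Nc j"
      using Ni jt by blast
    have mu: "\<mu> j \<in> Lam" and sub: "Nc j \<subseteq> Nc (Suc j)" using Ni jt by auto
    obtain g1 where g1: "klin sS ES N B g1" "hact N (Nc j) g1" "\<forall>x\<in>ES. g1 x - g x \<in> Nc (Suc j)"
      using sstep[OF N _ _ _ _ B sub NB rho g hg] D noext mu Ns jt by fastforce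
    obtain f where f: "klin sS ES N B f" "hact N {0} f" "\<forall>x\<in>ES. f x - g1 x \<in> Nc j"
      using Suc.IH[OF less_imp_le[OF jt]] B sub NB g1 by blast
    show "\<exists>f. klin sS ES N B f \<and> hact N {0} f \<and> (\<forall>x\<in>ES. f x - g x \<in> Nc (Suc j))"
    proof (intro exI[of _ f] conjI f(1,2) ballI)
      fix x assume x: "x \<in> ES"
      have "f x - g x = (f x - g1 x) + (g1 x - g x)" by simp
      moreover have "f x - g1 x \<in> Nc (Suc j)" using f(3) x sub by blast
      ultimately show "f x - g x \<in> Nc (Suc j)" using sub_modD(3)[of N "Nc (Suc j)"] Ns jt g1(3) x
        by (metis Suc_leI)
    qed
  qed
qed

end


context schur begin

lemma filt_forward:
  fixes N :: "('k, 'h, 'n::ab_group_add) modl" and D :: "'l \<Rightarrow> ('k, 'h, 'd::ab_group_add) modl"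
  assumes N: "is_mod sH N" and D: "\<forall>\<mu>\<in>Lam. is_mod sH (D \<mu>)" and noext: "\<forall>\<mu>\<in>Lam. \<not> ext1_nonzero sH XX (D \<mu>)"
    and F: "has_filt N D Lam"
  shows "has_filt (GG N) (\<lambda>\<mu>. GG (D \<mu>)) Lam"
proof -
  obtain t Nc \<mu> where H: "Nc 0 = {0} \<and> Nc t = carr N \<and> (\<forall>i\<le>t. sub_mod N (Nc i)) \<and>
      (\<forall>i<t. Nc i \<subseteq> Nc (Suc i) \<and> \<mu> i \<in> Lam \<and>
           (\<exists>f. mod_hom (N\<lparr>carr := Nc (Suc i)\<rparr>) (D (\<mu> i)) f \<and>
                f ` Nc (Suc i) = carr (D (\<mu> i)) \<and> {x \<in> Nc (Suc i). f x = 0} = Nc i))"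
    using F unfolding has_filt_def by (elim exE) (rule that, assumption)
  note N0 = conjunct1[OF H] and Nt = conjunct1[OF conjunct2[OF H]]
   and Ns = conjunct1[OF conjunct2[OF conjunct2[OF H]]] and Ni = conjunct2[OF conjunct2[OF conjunct2[OF H]]]
  define Gc where "Gc = (\<lambda>i. {f \<in> carr (GG N). \<forall>x. f x \<in> Nc i})"
  have "Gc 0 = {0}"
  proof
    show "Gc 0 \<subseteq> {0}" unfolding Gc_def N0 by auto
    show "{0} \<subseteq> Gc 0" unfolding Gc_def N0 using G_zero[OF N] by auto
  qed
  moreover have "Gc t = carr (GG N)"
    unfolding Gc_def Nt using Gcarr_D(1,5) mod_zero[OF N] by fastforce
  moreover have "\<forall>i\<le>t. sub_mod (GG N) (Gc i)"
  proof (intro allI impI)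
    fix i assume i: "i \<le> t"
    have S: "sub_mod N (Nc i)" using Ns i by simp
    show "sub_mod (GG N) (Gc i)" unfolding sub_mod_def
    proof (intro conjI ballI allI)
      show "Gc i \<subseteq> carr (GG N)" unfolding Gc_def by blast
      show "0 \<in> Gc i" unfolding Gc_def using G_zero[OF N] sub_modD(2)[OF S] by simp
      fix f assume f: "f \<in> Gc i"
      show "smul (GG N) c f \<in> Gc i" for c
        using f G_smul_closed[OF N] sub_modD(2,4)[OF S] unfolding Gc_def G_smul by auto
      show "act (GG N) s f \<in> Gc i" for s
        using f G_act_closed[OF N] sub_modD(2)[OF S] unfolding Gc_def G_act by auto
      fix g assume g: "g \<in> Gc i"
      show "f + g \<in> Gc i" using f g G_add[OF N] sub_modD(3)[OF S] unfolding Gc_def by auto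
    qed
  qed
  moreover have "\<forall>i<t. Gc i \<subseteq> Gc (Suc i) \<and> \<mu> i \<in> Lam \<and>
           (\<exists>f. mod_hom ((GG N)\<lparr>carr := Gc (Suc i)\<rparr>) (GG (D (\<mu> i))) f \<and>
                f ` Gc (Suc i) = carr (GG (D (\<mu> i))) \<and> {x \<in> Gc (Suc i). f x = 0} = Gc i)"
  proof (intro allI impI conjI)
    fix i assume i: "i < t"
    have sub: "Nc i \<subseteq> Nc (Suc i)" and mu: "\<mu> i \<in> Lam" using Ni i by auto
    show "Gc i \<subseteq> Gc (Suc i)" unfolding Gc_def using sub by blast
    show "\<mu> i \<in> Lam" by (rule mu)
    define Dm where "Dm = D (\<mu> i)"
    have Dm: "is_mod sH Dm" using D mu unfolding Dm_def by blast
    obtain \<rho> where rho: "mod_hom (N\<lparr>carr := Nc (Suc i)\<rparr>) Dm \<rho>"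
       "\<rho> ` Nc (Suc i) = carr Dm" "{x \<in> Nc (Suc i). \<rho> x = 0} = Nc i"
      using Ni i unfolding Dm_def by blast
    have S: "sub_mod N (Nc (Suc i))" using Ns i by simp
    have Si: "sub_mod N (Nc i)" using Ns i by simp
    note rD = rho(1)[unfolded mod_hom_restr]
    have radd: "x \<in> Nc (Suc i) \<Longrightarrow> y \<in> Nc (Suc i) \<Longrightarrow> \<rho> (x + y) = \<rho> x + \<rho> y" for x y using rD by blast
    have rsm: "x \<in> Nc (Suc i) \<Longrightarrow> \<rho> (smul N c x) = smul Dm c (\<rho> x)" for x c using rD by blast
    have ract: "x \<in> Nc (Suc i) \<Longrightarrow> \<rho> (act N a x) = act Dm a (\<rho> x)" for x a using rD by blast
    have rD': "x \<in> Nc (Suc i) \<Longrightarrow> \<rho> x \<in> carr Dm" for x using rD by blast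
    have r0: "\<rho> 0 = 0" using hom_zero[of "Nc (Suc i)" \<rho>] rD sub_modD(2)[OF S] by blast
    define \<Phi> where "\<Phi> = (\<lambda>f::'s \<Rightarrow> 'n. \<lambda>x. \<rho> (f x))"
    have PhiG: "f \<in> Gc (Suc i) \<Longrightarrow> \<Phi> f \<in> carr (GG Dm)" for f
    proof -
      assume f: "f \<in> Gc (Suc i)"
      hence fG: "f \<in> carr (GG N)" and fN: "\<And>x. f x \<in> Nc (Suc i)" unfolding Gc_def by auto
      show ?thesis unfolding \<Phi>_def
      proof (rule Gcarr_I)
        fix x assume x: "x \<in> ES"
        show "\<rho> (f x) \<in> carr Dm" using rD' fN by blast
        show "\<rho> (f (sS c x)) = smul Dm c (\<rho> (f x))" for c using Gcarr_D(3)[OF fG x] rsm fN by simp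
        show "\<rho> (f (\<phi> a * x)) = act Dm a (\<rho> (f x))" for a using Gcarr_D(4)[OF fG x] ract fN by simp
        show "\<rho> (f (x + y)) = \<rho> (f x) + \<rho> (f y)" if "y \<in> ES" for y using Gcarr_D(2)[OF fG x that] radd fN by simp
      next
        fix x assume "x \<notin> ES" thus "\<rho> (f x) = 0" using Gcarr_D(5)[OF fG] r0 by simp
      qed
    qed
    have hom: "mod_hom ((GG N)\<lparr>carr := Gc (Suc i)\<rparr>) (GG Dm) \<Phi>"
      unfolding mod_hom_restr
    proof (intro conjI ballI allI)
      fix f assume f: "f \<in> Gc (Suc i)"
      hence fN: "\<And>x. f x \<in> Nc (Suc i)" unfolding Gc_def by auto
      show "\<Phi> f \<in> carr (GG Dm)" by (rule PhiG[OF f])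
      show "\<Phi> (smul (GG N) c f) = smul (GG Dm) c (\<Phi> f)" for c
        unfolding \<Phi>_def G_smul using rsm fN r0 by (intro ext) simp
      show "\<Phi> (act (GG N) s f) = act (GG Dm) s (\<Phi> f)" for s
        unfolding \<Phi>_def G_act using r0 by (intro ext) simp
      fix g assume g: "g \<in> Gc (Suc i)"
      hence gN: "\<And>x. g x \<in> Nc (Suc i)" unfolding Gc_def by auto
      show "\<Phi> (f + g) = \<Phi> f + \<Phi> g" unfolding \<Phi>_def using radd fN gN by (intro ext) simp
    qed
    have im: "\<Phi> ` Gc (Suc i) = carr (GG Dm)"
    proof
      show "\<Phi> ` Gc (Suc i) \<subseteq> carr (GG Dm)" using PhiG by blast
      show "carr (GG Dm) \<subseteq> \<Phi> ` Gc (Suc i)"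
      proof
        fix u assume u: "u \<in> carr (GG Dm)"
        define w where "w = (\<lambda>b. SOME n. n \<in> Nc (Suc i) \<and> \<rho> n = u b)"
        have w: "b \<in> EB \<Longrightarrow> w b \<in> Nc (Suc i) \<and> \<rho> (w b) = u b" for b
        proof -
          assume b: "b \<in> EB"
          have "u b \<in> \<rho> ` Nc (Suc i)" unfolding rho(2) using Gcarr_D(1)[OF u] EB(2) b by blast
          hence "\<exists>n. n \<in> Nc (Suc i) \<and> \<rho> n = u b" by (elim imageE) auto
          thus ?thesis unfolding w_def by (rule someI_ex)
        qed
        define g where "g = lext N w"
        have gK: "klin sS ES N (Nc (Suc i)) g" unfolding g_def by (rule lext_klin[OF N S]) (use w in blast)
        have gS: "x \<in> ES \<Longrightarrow> g x \<in> Nc (Suc i)" for x using gK unfolding klin_def by blast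
        have rgK: "klin sS ES Dm (carr Dm) (\<lambda>x. \<rho> (g x))" unfolding klin_def
        proof (intro conjI ballI allI)
          fix x assume x: "x \<in> ES"
          show "\<rho> (g x) \<in> carr Dm" using rD' gS x by blast
          show "\<rho> (g (sS c x)) = smul Dm c (\<rho> (g x))" for c using gK x rsm[OF gS[OF x]] unfolding klin_def by simp
          fix y assume y: "y \<in> ES"
          show "\<rho> (g (x + y)) = \<rho> (g x) + \<rho> (g y)" using gK x y radd[OF gS[OF x] gS[OF y]] unfolding klin_def by simp
        qed
        have gb: "b \<in> EB \<Longrightarrow> g b = w b" for b unfolding g_def
          by (rule lext_basis[OF N]) (use w sub_modD(1)[OF S] in blast)
        have rg: "x \<in> ES \<Longrightarrow> \<rho> (g x) = u x" for x
          by (rule klin_unique[OF rgK G_klin[OF u]]) (use gb w in simp_all)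
        have hg: "hact N (Nc i) g" unfolding hact_def
        proof (intro allI ballI)
          fix a x assume x: "x \<in> ES"
          have hx: "\<phi> a * x \<in> ES" by (rule ES_closed(5)[OF x])
          have in1: "g (\<phi> a * x) - act N a (g x) \<in> Nc (Suc i)"
            using sub_mod_diff[OF N S gS[OF hx] sub_modD(5)[OF S gS[OF x]]] .
          have "\<rho> (g (\<phi> a * x) - act N a (g x)) = \<rho> (g (\<phi> a * x)) - \<rho> (act N a (g x))"
            by (rule hom_diff[OF _ gS[OF hx] sub_modD(5)[OF S gS[OF x]] in1]) (use radd in blast)
          also have "\<dots> = 0" unfolding ract[OF gS[OF x]] rg[OF x] rg[OF hx] Gcarr_D(4)[OF u x] by simp
          finally show "g (\<phi> a * x) - act N a (g x) \<in> Nc i" using rho(3) in1 by blast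
        qed
        obtain f where f: "klin sS ES N (Nc (Suc i)) f" "hact N {0} f" "\<forall>x\<in>ES. f x - g x \<in> Nc i"
          using lift[OF N D noext N0 Ns Ni less_imp_le[OF i]] S sub gK hg by blast
        define F where "F = (\<lambda>x. if x \<in> ES then f x else 0)"
        have fS: "x \<in> ES \<Longrightarrow> f x \<in> Nc (Suc i)" for x using f(1) unfolding klin_def by blast
        have FG: "F \<in> carr (GG N)"
        proof (rule Gcarr_I)
          fix x assume x: "x \<in> ES"
          show "F x \<in> carr N" unfolding F_def using x fS sub_modD(1)[OF S] by auto
          show "F (sS c x) = smul N c (F x)" for c unfolding F_def using x ES_closed(4)[OF x] f(1)
            unfolding klin_def by simp
          show "F (\<phi> a * x) = act N a (F x)" for a unfolding F_def using x ES_closed(5)[OF x] f(2)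
            unfolding hact_def by simp
          show "F (x + y) = F x + F y" if "y \<in> ES" for y unfolding F_def using x that ES_closed(2)[OF x that] f(1)
            unfolding klin_def by simp
        qed (simp add: F_def)
        have FGc: "F \<in> Gc (Suc i)" unfolding Gc_def using FG fS sub_modD(2)[OF S] F_def by auto
        have "\<Phi> F = u"
        proof
          fix x show "\<Phi> F x = u x"
          proof (cases "x \<in> ES")
            case True
            have d: "f x - g x \<in> Nc (Suc i)" using f(3) True sub by blast
            have "\<rho> (f x) = \<rho> (g x + (f x - g x))" by simp
            also have "\<dots> = \<rho> (g x) + \<rho> (f x - g x)" by (rule radd[OF gS[OF True] d])
            also have "\<rho> (f x - g x) = 0" using rho(3) f(3) True by blast
            finally show ?thesis unfolding \<Phi>_def F_def using True rg[OF True] by simp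
          next
            case False thus ?thesis unfolding \<Phi>_def F_def using r0 Gcarr_D(5)[OF u] by simp
          qed
        qed
        thus "u \<in> \<Phi> ` Gc (Suc i)" using FGc by blast
      qed
    qed
    have kr: "{x \<in> Gc (Suc i). \<Phi> x = 0} = Gc i"
    proof
      show "{x \<in> Gc (Suc i). \<Phi> x = 0} \<subseteq> Gc i"
      proof
        fix f assume "f \<in> {x \<in> Gc (Suc i). \<Phi> x = 0}"
        hence f: "f \<in> Gc (Suc i)" and z: "\<And>x. \<rho> (f x) = 0" unfolding \<Phi>_def by (auto dest: fun_cong)
        have "\<forall>x. f x \<in> Nc i" using f z rho(3) unfolding Gc_def by blast
        thus "f \<in> Gc i" using f unfolding Gc_def by blast
      qed
      show "Gc i \<subseteq> {x \<in> Gc (Suc i). \<Phi> x = 0}"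
      proof
        fix f assume f: "f \<in> Gc i"
        have "\<forall>x. \<rho> (f x) = 0" using f rho(3) sub unfolding Gc_def by blast
        hence "\<Phi> f = 0" unfolding \<Phi>_def by (intro ext) simp
        thus "f \<in> {x \<in> Gc (Suc i). \<Phi> x = 0}" using f sub unfolding Gc_def by blast
      qed
    qed
    show "\<exists>f. mod_hom ((GG N)\<lparr>carr := Gc (Suc i)\<rparr>) (GG (D (\<mu> i))) f \<and>
                f ` Gc (Suc i) = carr (GG (D (\<mu> i))) \<and> {x \<in> Gc (Suc i). f x = 0} = Gc i"
      using hom im kr unfolding Dm_def by blast
  qed
  ultimately show ?thesis unfolding has_filt_def
    by (intro exI[of _ t] exI[of _ Gc] exI[of _ \<mu>]) (intro conjI)
qed

end


lemma dual_simps: "smul (dual_mod st V) c f = (\<lambda>x. if x \<in> carr V then c * f x else 0)"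
  "act (dual_mod st V) h f = (\<lambda>x. if x \<in> carr V then f (act V (st h) x) else 0)"
  "f \<in> carr (dual_mod st V) \<longleftrightarrow> (\<forall>x\<in>carr V. \<forall>y\<in>carr V. f (x + y) = f x + f y) \<and>
                 (\<forall>c. \<forall>x\<in>carr V. f (smul V c x) = c * f x) \<and> (\<forall>x. x \<notin> carr V \<longrightarrow> f x = 0)"
  unfolding dual_mod_def by simp_all

lemma dual_premod:
  fixes V :: "('k::field, 'h::ring_1, 'v::ab_group_add) modl"
  assumes V: "is_mod sH V"
  shows "premod (smul (dual_mod st V)) (carr (dual_mod st V))"
  unfolding premod_def dual_simps
  using mod_add[OF V] mod_smul[OF V]
  by (auto simp: algebra_simps dual_simps(3) intro!: ext)

lemma dual_is_mod:
  fixes V :: "('k::field, 'h::ring_1, 'v::ab_group_add) modl"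
  assumes V: "is_mod sH V" and anti: "alg_anti_auto sH st"
    and fd: "fin_dim_on (smul (dual_mod st V)) (carr (dual_mod st V))"
  shows "is_mod sH (dual_mod st V)"
proof -
  have st: "st (x + y) = st x + st y" "st (x * y) = st y * st x" "st (sH c x) = sH c (st x)" "st 1 = 1" for x y c
    using anti unfolding alg_anti_auto_def by auto
  note P = dual_premod[OF V, of st, unfolded premod_def]
  show ?thesis
    unfolding is_mod_def
    using P fd mod_add[OF V] mod_smul[OF V] mod_act[OF V] act_add[OF V] act_adds[OF V] act_mult[OF V]
      act_one[OF V] act_sa[OF V] act_smul[OF V]
    by (auto simp: algebra_simps dual_simps st intro!: ext)
qed



lemma dual_fd:
  fixes V :: "('k::field, 'h::ring_1, 'v::ab_group_add) modl" and W :: "('k, 'h, 'v) modl"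
  assumes W: "is_mod sH W" and V: "is_mod sH V" and iso: "mod_iso (dual_mod st V) (twist_mod hs W)"
  shows "fin_dim_on (smul (dual_mod st V)) (carr (dual_mod st V))"
proof -
  obtain f where f: "mod_hom (dual_mod st V) (twist_mod hs W) f" "bij_betw f (carr (dual_mod st V)) (carr (twist_mod hs W))"
    using iso unfolding mod_iso_def by blast
  have tw: "carr (twist_mod hs W) = carr W" "smul (twist_mod hs W) = smul W" unfolding twist_mod_def by simp_all
  note fD = f(1)[unfolded mod_hom_def tw]
  have bij: "bij_betw f (carr (dual_mod st V)) (carr W)" using f(2) tw by simp
  have inj: "inj_on f (carr (dual_mod st V))" using bij bij_betw_def by blast
  define L where "L = the_inv_into (carr (dual_mod st V)) f"
  have bL: "bij_betw L (carr W) (carr (dual_mod st V))" unfolding L_def by (rule bij_betw_the_inv_into[OF bij])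
  have LD: "x \<in> carr W \<Longrightarrow> L x \<in> carr (dual_mod st V)" for x using bL bij_betwE by blast
  have fL: "x \<in> carr W \<Longrightarrow> f (L x) = x" for x unfolding L_def using f_the_inv_into_f[OF inj] bij
    by (simp add: bij_betw_def)
  have Lf: "y \<in> carr (dual_mod st V) \<Longrightarrow> L (f y) = y" for y unfolding L_def by (rule the_inv_into_f_f[OF inj])
  note P = dual_premod[OF V, of st, unfolded premod_def]
  have "fin_dim_on (smul (dual_mod st V)) (L ` carr W)"
  proof (rule fin_dim_image[OF is_mod_premod[OF W] dual_premod[OF V] mod_fd[OF W]])
    show "x \<in> carr W \<Longrightarrow> L x \<in> carr (dual_mod st V)" for x by (rule LD)
    show "L (x + y) = L x + L y" if "x \<in> carr W" "y \<in> carr W" for x y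
    proof -
      have s: "L x + L y \<in> carr (dual_mod st V)" using P LD that by blast
      have "f (L x + L y) = x + y" using fD LD that fL by simp
      thus ?thesis using Lf[OF s] by metis
    qed
    show "L (smul W c x) = smul (dual_mod st V) c (L x)" if "x \<in> carr W" for c x
    proof -
      have s: "smul (dual_mod st V) c (L x) \<in> carr (dual_mod st V)" using P LD that by blast
      have "f (smul (dual_mod st V) c (L x)) = smul W c x" using fD LD that fL by simp
      thus ?thesis using Lf[OF s] by metis
    qed
  qed
  moreover have "L ` carr W = carr (dual_mod st V)" using bL by (simp add: bij_betw_def)
  ultimately show ?thesis by simp
qed

theorem lemma8p4:
  fixes sS :: "'k::field \<Rightarrow> 's::ring_1 \<Rightarrow> 's"
    and sH :: "'k \<Rightarrow> 'h::ring_1 \<Rightarrow> 'h"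
    and e :: 's and \<phi> :: "'h \<Rightarrow> 's"
    and Sp :: "'l::order \<Rightarrow> ('k, 'h, 'v::ab_group_add) modl"
    and Lam :: "'l set" and hs hst :: "'h \<Rightarrow> 'h" and tr :: "'l \<Rightarrow> 'l"
  assumes "kalg sS" and "kalg sH" and "e * e = e" and "corner_iso sS sH e \<phi>"
    and "admits_dual_specht sH Sp Lam hs hst tr"
    and "\<forall>a\<in>Lam. \<not> ext1_nonzero sH (eS_mod sS e \<phi>) (dual_mod hst (Sp a))"
  shows "(\<forall>N :: ('k, 'h, 'n::ab_group_add) modl. is_mod sH N \<longrightarrow>
            (has_filt N (\<lambda>\<mu>. dual_mod hst (Sp \<mu>)) Lam \<longleftrightarrow>
             has_filt (Gmod sS e \<phi> N) (\<lambda>\<mu>. Gmod sS e \<phi> (dual_mod hst (Sp \<mu>))) Lam))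
       \<and> (\<forall>M :: ('k, 's, 'm::ab_group_add) modl. is_mod sS M \<longrightarrow>
            has_filt M (\<lambda>\<mu>. Gmod sS e \<phi> (dual_mod hst (Sp \<mu>))) Lam \<longrightarrow>
            mod_iso (Gmod sS e \<phi> (Fmod e \<phi> M)) M)"
proof -
  interpret schur sS sH e \<phi> by (rule schur.intro) (rule assms)+
  note H = assms(5)[unfolded admits_dual_specht_def]
  have ads1: "\<forall>a\<in>Lam. is_mod sH (Sp a)" using conjunct1[OF conjunct2[OF H]] .
  have ads2: "alg_anti_auto sH hst"
    using conjunct1[OF conjunct2[OF conjunct2[OF conjunct2[OF conjunct2[OF conjunct2[OF H]]]]]] .
  have ads3: "\<forall>a\<in>Lam. tr a \<in> Lam \<and> tr (tr a) = a"
    using conjunct1[OF conjunct2[OF conjunct2[OF conjunct2[OF conjunct2[OF conjunct2[OF conjunct2[OF H]]]]]]] .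
  have ads4: "\<forall>a\<in>Lam. mod_iso (dual_mod hst (Sp (tr a))) (twist_mod hs (Sp a))"
    using conjunct2[OF conjunct2[OF conjunct2[OF conjunct2[OF conjunct2[OF conjunct2[OF conjunct2[OF conjunct2[OF H]]]]]]]] .
  note ads = ads1 ads2 ads3 ads4
  have D: "\<forall>\<mu>\<in>Lam. is_mod sH (dual_mod hst (Sp \<mu>))"
  proof
    fix \<mu> assume mu: "\<mu> \<in> Lam"
    have t: "tr \<mu> \<in> Lam" "tr (tr \<mu>) = \<mu>" using ads(3) mu by auto
    have "mod_iso (dual_mod hst (Sp (tr (tr \<mu>)))) (twist_mod hs (Sp (tr \<mu>)))" using ads(4) t(1) by blast
    hence iso: "mod_iso (dual_mod hst (Sp \<mu>)) (twist_mod hs (Sp (tr \<mu>)))" unfolding t(2) .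
    have fd: "fin_dim_on (smul (dual_mod hst (Sp \<mu>))) (carr (dual_mod hst (Sp \<mu>)))"
      by (rule dual_fd[OF _ _ iso]) (use ads(1) mu t in auto)
    show "is_mod sH (dual_mod hst (Sp \<mu>))" by (rule dual_is_mod[OF _ ads(2) fd]) (use ads(1) mu in auto)
  qed
  show ?thesis
  proof (intro conjI allI impI)
    fix N :: "('k, 'h, 'n::ab_group_add) modl" assume N: "is_mod sH N"
    show "has_filt N (\<lambda>\<mu>. dual_mod hst (Sp \<mu>)) Lam \<longleftrightarrow>
             has_filt (Gmod sS e \<phi> N) (\<lambda>\<mu>. Gmod sS e \<phi> (dual_mod hst (Sp \<mu>))) Lam"
      using filt_forward[OF N D assms(6)] filt_back[OF N D] by blast
  next
    fix M :: "('k, 's, 'm::ab_group_add) modl"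
    assume M: "is_mod sS M" and F: "has_filt M (\<lambda>\<mu>. Gmod sS e \<phi> (dual_mod hst (Sp \<mu>))) Lam"
    show "mod_iso (Gmod sS e \<phi> (Fmod e \<phi> M)) M" by (rule GF_iso[OF M D F])
  qed
qed


end
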